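(* (i) $\overline{H_{par}}$ is an $H$-$H_{par}$-bimodule via $$h\triangleright\Big(\sum_i h_i\triangleright\varphi(x_i)\Big)\triangleleft y=\sum_i hh_i\triangleright\varphi(x_iy),$$ for $h,h_i\in H$ and $x_i,y\in H_{par}$. (ii) Let $M$ be a partial $H$-module, regarded as a left $H_{par}$-module. Equip $\overline{H_{par}}\otimes_{H_{par}}M$ with the left $H$-module structure coming from (i), and define $$T:\overline{H_{par}}\otimes_{H_{par}}M\to\overline{H_{par}}\otimes_{H_{par}}M,\quad T(f\otimes m)=\varphi(1)\otimes f(1_H)m,$$ $$\phi:M\to\overline{H_{par}}\otimes_{H_{par}}M,\quad \phi(m)=\varphi(1)\otimes m.$$ Here $1$ is the unit of $H_{par}$ and $f(1_H)\in H_{par}$ acts on $m$. Then $((\overline{H_{par}}\otimes_{H_{par}}M,T),\phi)$ is a proper dilation of $M$ (called the secondary dilation of $M$).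
   Context: Throughout, $k$ is a field and $H$ is a Hopf algebra over $k$ with bijective antipode $S$ and Sweedler notation $\Delta(h)=h_{(1)}\otimes h_{(2)}$. A partial $H$-module is a vector space $M$ with linear $\pi:H\to\mathrm{End}_k(M)$ satisfying, for all $h,k\in H$: - $\pi(1_H)=\mathrm{id}$; - $\pi(h)\pi(k_{(1)})\pi(S(k_{(2)}))=\pi(hk_{(1)})\pi(S(k_{(2)}))$; - $\pi(h_{(1)})\pi(S(h_{(2)}))\pi(k)=\pi(h_{(1)})\pi(S(h_{(2)})k)$; - $\pi(h)\pi(S(k_{(1)}))\pi(k_{(2)})=\pi(hS(k_{(1)}))\pi(k_{(2)})$; - $\pi(S(h_{(1)}))\pi(h_{(2)})\pi(k)=\pi(S(h_{(1)}))\pi(h_{(2)}k)$. The algebra $H_{par}$ is the quotient of the tensor algebra $T(H)$ (writing $[h]$ for the image of $h$) by the ideal generated by, for all $h,k\in H$: - $[1_H]-1$; - $[h][k_{(1)}][S(k_{(2)})]-[hk_{(1)}][S(k_{(2)})]$; - $[h_{(1)}][S(h_{(2)})][k]-[h_{(1)}][S(h_{(2)})k]$; - $[h][S(k_{(1)})][k_{(2)}]-[hS(k_{(1)})][k_{(2)}]$; - $[S(h_{(1)})][h_{(2)}][k]-[S(h_{(1)})][h_{(2)}k]$. Partial $H$-modules are identified with left $H_{par}$-modules via $[h]m=\pi(h)(m)$. In particular, $H_{par}$ is a partial $H$-module via $\pi(h)(x)=[h]x$. For a left $H$-module $N$ and a linear projection $T$, put $T_h(x)=h_{(1)}\triangleright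 T(S(h_{(2)})\triangleright x)$. $T$ satisfies the c-condition if $T_h\circ T=T\circ T_h$ for all $h$; then $T(N)$ is a partial $H$-module via $\pi_T(h)(x)=T(h\triangleright x)$. A dilation of a partial module $M$ is $((N,T),\theta)$ with $N$ a left $H$-module, $T$ a projection satisfying the c-condition, and $\theta:M\to T(N)$ an isomorphism of partial $H$-modules onto $(T(N),\pi_T)$. It is proper if $N$ is generated as an $H$-module by $T(N)$. Standard dilation of a partial module $(P,\rho)$: $\operatorname{Hom}_k(H,P)$ is a left $H$-module via $(h\triangleright f)(k)=f(kh)$, $\varphi(p)(h)=\rho(h)(p)$, $\overline P=H\triangleright\varphi(P)$. Thus $\overline{H_{par}}=H\triangleright\varphi(H_{par})\subseteq\operatorname{Hom}_k(H,H_{par})$ with $\varphi(x)(h)=[h]x$. *)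

theory Defs
  imports "HOL-Library.Poly_Mapping"
begin

definition lin_map :: "('k::field \<Rightarrow> 'a::ab_group_add \<Rightarrow> 'a) \<Rightarrow> ('k \<Rightarrow> 'b::ab_group_add \<Rightarrow> 'b) \<Rightarrow> ('a \<Rightarrow> 'b) \<Rightarrow> bool" where
  "lin_map s1 s2 f \<longleftrightarrow> (\<forall>x y. f (x + y) = f x + f y) \<and> (\<forall>c x. f (s1 c x) = s2 c (f x))"

definition vspace :: "('k::field \<Rightarrow> 'a::ab_group_add \<Rightarrow> 'a) \<Rightarrow> bool" where
  "vspace s \<longleftrightarrow> (\<forall>c x y. s c (x + y) = s c x + s c y) \<and> (\<forall>c d x. s (c + d) x = s c x + s d x)
     \<and> (\<forall>c d x. s (c * d) x = s c (s d x)) \<and> (\<forall>x. s 1 x = x)"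

text \<open>Elements of H (x) H (resp. H (x) H (x) H) are represented by finite lists of pairs
  (sums of simple tensors). Two representations denote the same tensor iff they pair equally
  with all f (x) g for linear functionals f, g (nondegeneracy of the pairing over a field).\<close>
definition teq :: "('k::field \<Rightarrow> 'h::ab_group_add \<Rightarrow> 'h) \<Rightarrow> ('h \<times> 'h) list \<Rightarrow> ('h \<times> 'h) list \<Rightarrow> bool" where
  "teq sc xs ys \<longleftrightarrow> (\<forall>f g. lin_map sc (*) f \<longrightarrow> lin_map sc (*) g \<longrightarrow>
      (\<Sum>(a,b)\<leftarrow>xs. f a * g b) = (\<Sum>(a,b)\<leftarrow>ys. f a * g b))"

definition teq3 :: "('k::field \<Rightarrow> 'h::ab_group_add \<Rightarrow> 'h) \<Rightarrow> ('h \<times> 'h \<times> 'h) list \<Rightarrow> ('h \<times> 'h \<times> 'h) list \<Rightarrow> bool" where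
  "teq3 sc xs ys \<longleftrightarrow> (\<forall>f g l. lin_map sc (*) f \<longrightarrow> lin_map sc (*) g \<longrightarrow> lin_map sc (*) l \<longrightarrow>
      (\<Sum>(a,b,c)\<leftarrow>xs. f a * g b * l c) = (\<Sum>(a,b,c)\<leftarrow>ys. f a * g b * l c))"

text \<open>H is the type 'h (a ring), a k-algebra via sc; D h is a representation of \<Delta>(h)
  (Sweedler: \<Delta>(h) = \<Sum>(h1,h2)\<leftarrow>D h. h1 (x) h2); eps is the counit, S the antipode.\<close>
definition hopf_algebra :: "('k::field \<Rightarrow> 'h::ring_1 \<Rightarrow> 'h) \<Rightarrow> ('h \<Rightarrow> ('h \<times> 'h) list) \<Rightarrow> ('h \<Rightarrow> 'k) \<Rightarrow> ('h \<Rightarrow> 'h) \<Rightarrow> bool" where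
  "hopf_algebra sc D eps S \<longleftrightarrow>
     vspace sc \<and>
     (\<forall>c x y. sc c (x * y) = sc c x * y \<and> sc c (x * y) = x * sc c y) \<and>
     (\<forall>x y. teq sc (D (x + y)) (D x @ D y)) \<and>
     (\<forall>c x. teq sc (D (sc c x)) [(sc c a, b). (a, b) \<leftarrow> D x]) \<and>
     (\<forall>x. teq3 sc [(a1, a2, b). (a, b) \<leftarrow> D x, (a1, a2) \<leftarrow> D a]
                  [(a, b1, b2). (a, b) \<leftarrow> D x, (b1, b2) \<leftarrow> D b]) \<and>
     (\<forall>x y. teq sc (D (x * y)) [(a * c, b * d). (a, b) \<leftarrow> D x, (c, d) \<leftarrow> D y]) \<and>
     teq sc (D 1) [(1, 1)] \<and>
     lin_map sc (*) eps \<and> eps 1 = 1 \<and> (\<forall>x y. eps (x * y) = eps x * eps y) \<and>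
     (\<forall>x. (\<Sum>(a,b)\<leftarrow>D x. sc (eps a) b) = x \<and> (\<Sum>(a,b)\<leftarrow>D x. sc (eps b) a) = x) \<and>
     lin_map sc sc S \<and>
     (\<forall>x. (\<Sum>(a,b)\<leftarrow>D x. S a * b) = sc (eps x) 1 \<and> (\<Sum>(a,b)\<leftarrow>D x. a * S b) = sc (eps x) 1) \<and>
     bij S"

definition csum :: "('v \<Rightarrow> 'v \<Rightarrow> 'v) \<Rightarrow> 'v \<Rightarrow> 'v list \<Rightarrow> 'v" where
  "csum add z xs = foldr add xs z"

definition cvs :: "'v set \<Rightarrow> ('v \<Rightarrow> 'v \<Rightarrow> 'v) \<Rightarrow> 'v \<Rightarrow> ('k::field \<Rightarrow> 'v \<Rightarrow> 'v) \<Rightarrow> bool" where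
  "cvs V add z s \<longleftrightarrow> z \<in> V \<and> (\<forall>x\<in>V. \<forall>y\<in>V. add x y \<in> V) \<and> (\<forall>c. \<forall>x\<in>V. s c x \<in> V) \<and>
     (\<forall>x\<in>V. \<forall>y\<in>V. \<forall>w\<in>V. add (add x y) w = add x (add y w)) \<and>
     (\<forall>x\<in>V. \<forall>y\<in>V. add x y = add y x) \<and> (\<forall>x\<in>V. add z x = x) \<and>
     (\<forall>x\<in>V. \<exists>y\<in>V. add x y = z) \<and>
     (\<forall>c. \<forall>x\<in>V. \<forall>y\<in>V. s c (add x y) = add (s c x) (s c y)) \<and>
     (\<forall>c d. \<forall>x\<in>V. s (c + d) x = add (s c x) (s d x)) \<and>
     (\<forall>c d. \<forall>x\<in>V. s (c * d) x = s c (s d x)) \<and> (\<forall>x\<in>V. s 1 x = x)"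

definition clin :: "'a set \<Rightarrow> ('a \<Rightarrow> 'a \<Rightarrow> 'a) \<Rightarrow> ('k::field \<Rightarrow> 'a \<Rightarrow> 'a) \<Rightarrow>
                    'b set \<Rightarrow> ('b \<Rightarrow> 'b \<Rightarrow> 'b) \<Rightarrow> ('k \<Rightarrow> 'b \<Rightarrow> 'b) \<Rightarrow> ('a \<Rightarrow> 'b) \<Rightarrow> bool" where
  "clin V1 add1 s1 V2 add2 s2 f \<longleftrightarrow> (\<forall>x\<in>V1. f x \<in> V2) \<and>
     (\<forall>x\<in>V1. \<forall>y\<in>V1. f (add1 x y) = add2 (f x) (f y)) \<and> (\<forall>c. \<forall>x\<in>V1. f (s1 c x) = s2 c (f x))"

definition hmod :: "('k::field \<Rightarrow> 'h::ring_1 \<Rightarrow> 'h) \<Rightarrow> 'v set \<Rightarrow> ('v \<Rightarrow> 'v \<Rightarrow> 'v) \<Rightarrow> 'v \<Rightarrow> ('k \<Rightarrow> 'v \<Rightarrow> 'v)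
                    \<Rightarrow> ('h \<Rightarrow> 'v \<Rightarrow> 'v) \<Rightarrow> bool" where
  "hmod sc V add z s act \<longleftrightarrow> cvs V add z s \<and> (\<forall>h. clin V add s V add s (act h)) \<and>
     (\<forall>h k. \<forall>v\<in>V. act (h + k) v = add (act h v) (act k v)) \<and>
     (\<forall>c h. \<forall>v\<in>V. act (sc c h) v = s c (act h v)) \<and>
     (\<forall>h k. \<forall>v\<in>V. act (h * k) v = act h (act k v)) \<and> (\<forall>v\<in>V. act 1 v = v)"

definition pmod :: "('k::field \<Rightarrow> 'h::ring_1 \<Rightarrow> 'h) \<Rightarrow> ('h \<Rightarrow> ('h \<times> 'h) list) \<Rightarrow> ('h \<Rightarrow> 'h) \<Rightarrow>
                    'v set \<Rightarrow> ('v \<Rightarrow> 'v \<Rightarrow> 'v) \<Rightarrow> 'v \<Rightarrow> ('k \<Rightarrow> 'v \<Rightarrow> 'v) \<Rightarrow> ('h \<Rightarrow> 'v \<Rightarrow> 'v) \<Rightarrow> bool" where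
  "pmod sc D S V add z s \<pi> \<longleftrightarrow> cvs V add z s \<and> (\<forall>h. clin V add s V add s (\<pi> h)) \<and>
     (\<forall>h k. \<forall>v\<in>V. \<pi> (h + k) v = add (\<pi> h v) (\<pi> k v)) \<and>
     (\<forall>c h. \<forall>v\<in>V. \<pi> (sc c h) v = s c (\<pi> h v)) \<and>
     (\<forall>v\<in>V. \<pi> 1 v = v) \<and>
     (\<forall>h k. \<forall>v\<in>V. csum add z [\<pi> h (\<pi> a (\<pi> (S b) v)). (a, b) \<leftarrow> D k]
                   = csum add z [\<pi> (h * a) (\<pi> (S b) v). (a, b) \<leftarrow> D k]) \<and>
     (\<forall>h k. \<forall>v\<in>V. csum add z [\<pi> a (\<pi> (S b) (\<pi> k v)). (a, b) \<leftarrow> D h]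
                   = csum add z [\<pi> a (\<pi> (S b * k) v). (a, b) \<leftarrow> D h]) \<and>
     (\<forall>h k. \<forall>v\<in>V. csum add z [\<pi> h (\<pi> (S a) (\<pi> b v)). (a, b) \<leftarrow> D k]
                   = csum add z [\<pi> (h * S a) (\<pi> b v). (a, b) \<leftarrow> D k]) \<and>
     (\<forall>h k. \<forall>v\<in>V. csum add z [\<pi> (S a) (\<pi> b (\<pi> k v)). (a, b) \<leftarrow> D h]
                   = csum add z [\<pi> (S a) (\<pi> (b * k) v). (a, b) \<leftarrow> D h])"

definition Tc :: "('h \<Rightarrow> ('h \<times> 'h) list) \<Rightarrow> ('h \<Rightarrow> 'h) \<Rightarrow> ('v \<Rightarrow> 'v \<Rightarrow> 'v) \<Rightarrow> 'v \<Rightarrow> ('h \<Rightarrow> 'v \<Rightarrow> 'v)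
                  \<Rightarrow> ('v \<Rightarrow> 'v) \<Rightarrow> 'h \<Rightarrow> 'v \<Rightarrow> 'v" where
  "Tc D S add z act T h x = csum add z [act a (T (act (S b) x)). (a, b) \<leftarrow> D h]"

text \<open>((N,T),theta) is a dilation of the partial module (M, pi) (M the whole type 'm).\<close>
definition dilation :: "('k::field \<Rightarrow> 'h::ring_1 \<Rightarrow> 'h) \<Rightarrow> ('h \<Rightarrow> ('h \<times> 'h) list) \<Rightarrow> ('h \<Rightarrow> 'h) \<Rightarrow>
      ('k \<Rightarrow> 'm::ab_group_add \<Rightarrow> 'm) \<Rightarrow> ('h \<Rightarrow> 'm \<Rightarrow> 'm) \<Rightarrow>
      'v set \<Rightarrow> ('v \<Rightarrow> 'v \<Rightarrow> 'v) \<Rightarrow> 'v \<Rightarrow> ('k \<Rightarrow> 'v \<Rightarrow> 'v) \<Rightarrow> ('h \<Rightarrow> 'v \<Rightarrow> 'v) \<Rightarrow>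
      ('v \<Rightarrow> 'v) \<Rightarrow> ('m \<Rightarrow> 'v) \<Rightarrow> bool" where
  "dilation sc D S scM \<pi> N add z s act T \<theta> \<longleftrightarrow>
     hmod sc N add z s act \<and>
     clin N add s N add s T \<and> (\<forall>x\<in>N. T (T x) = T x) \<and>
     (\<forall>h. \<forall>x\<in>N. Tc D S add z act T h (T x) = T (Tc D S add z act T h x)) \<and>
     pmod sc D S (T ` N) add z s (\<lambda>h x. T (act h x)) \<and>
     bij_betw \<theta> UNIV (T ` N) \<and>
     (\<forall>m m'. \<theta> (m + m') = add (\<theta> m) (\<theta> m')) \<and> (\<forall>c m. \<theta> (scM c m) = s c (\<theta> m)) \<and>
     (\<forall>h m. \<theta> (\<pi> h m) = T (act h (\<theta> m)))"

definition proper_dilation where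
  "proper_dilation sc D S scM \<pi> N add z s act T \<theta> \<longleftrightarrow>
     dilation sc D S scM \<pi> N add z s act T \<theta> \<and>
     (\<forall>x\<in>N. \<exists>l. set l \<subseteq> UNIV \<times> T ` N \<and> x = csum add z (map (\<lambda>(h, t). act h t) l))"

definition bimodule :: "('k::field \<Rightarrow> 'h::ring_1 \<Rightarrow> 'h) \<Rightarrow>
      'v set \<Rightarrow> ('v \<Rightarrow> 'v \<Rightarrow> 'v) \<Rightarrow> 'v \<Rightarrow> ('k \<Rightarrow> 'v \<Rightarrow> 'v) \<Rightarrow> ('h \<Rightarrow> 'v \<Rightarrow> 'v) \<Rightarrow>
      'a set \<Rightarrow> ('a \<Rightarrow> 'a \<Rightarrow> 'a) \<Rightarrow> ('k \<Rightarrow> 'a \<Rightarrow> 'a) \<Rightarrow> ('a \<Rightarrow> 'a \<Rightarrow> 'a) \<Rightarrow> 'a \<Rightarrow>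
      ('v \<Rightarrow> 'a \<Rightarrow> 'v) \<Rightarrow> bool" where
  "bimodule sc V add z s lact A aadd asc amul aone ract \<longleftrightarrow>
     hmod sc V add z s lact \<and>
     (\<forall>f\<in>V. \<forall>y\<in>A. ract f y \<in> V) \<and>
     (\<forall>f\<in>V. ract f aone = f) \<and>
     (\<forall>f\<in>V. \<forall>y\<in>A. \<forall>y'\<in>A. ract (ract f y) y' = ract f (amul y y')) \<and>
     (\<forall>f\<in>V. \<forall>g\<in>V. \<forall>y\<in>A. ract (add f g) y = add (ract f y) (ract g y)) \<and>
     (\<forall>f\<in>V. \<forall>y\<in>A. \<forall>y'\<in>A. ract f (aadd y y') = add (ract f y) (ract f y')) \<and>
     (\<forall>c. \<forall>f\<in>V. \<forall>y\<in>A. ract f (asc c y) = s c (ract f y) \<and> ract (s c f) y = s c (ract f y)) \<and>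
     (\<forall>h. \<forall>f\<in>V. \<forall>y\<in>A. lact h (ract f y) = ract (lact h f) y)"

definition tsc :: "'k \<Rightarrow> ('a \<Rightarrow>\<^sub>0 'k::field) \<Rightarrow> ('a \<Rightarrow>\<^sub>0 'k)" where
  "tsc c p = Poly_Mapping.map (\<lambda>a. c * a) p"

definition fspan :: "('a \<Rightarrow>\<^sub>0 'k::field) set \<Rightarrow> ('a \<Rightarrow>\<^sub>0 'k) set" where
  "fspan X = {(\<Sum>x\<in>F. tsc (c x) x) | F c. finite F \<and> F \<subseteq> X}"

definition qcl :: "'a::ab_group_add set \<Rightarrow> 'a \<Rightarrow> 'a set" where
  "qcl W x = {y. y - x \<in> W}"

definition rep :: "'a set \<Rightarrow> 'a" where
  "rep A = (SOME x. x \<in> A)"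

definition pmmap :: "('a \<Rightarrow> 'b) \<Rightarrow> ('a \<Rightarrow>\<^sub>0 'k::field) \<Rightarrow> ('b \<Rightarrow>\<^sub>0 'k)" where
  "pmmap g p = (\<Sum>k\<in>Poly_Mapping.keys p. Poly_Mapping.single (g k) (Poly_Mapping.lookup p k))"

section \<open>The tensor algebra T(H) (words over H) and H_par\<close>

definition tmul :: "('h list \<Rightarrow>\<^sub>0 'k::field) \<Rightarrow> ('h list \<Rightarrow>\<^sub>0 'k) \<Rightarrow> ('h list \<Rightarrow>\<^sub>0 'k)" where
  "tmul p q = (\<Sum>u\<in>Poly_Mapping.keys p. \<Sum>v\<in>Poly_Mapping.keys q. Poly_Mapping.single (u @ v) (Poly_Mapping.lookup p u * Poly_Mapping.lookup q v))"

definition tone :: "'h list \<Rightarrow>\<^sub>0 'k::field" where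
  "tone = Poly_Mapping.single [] 1"

definition gen :: "'h \<Rightarrow> ('h list \<Rightarrow>\<^sub>0 'k::field)" where
  "gen h = Poly_Mapping.single [h] 1"

text \<open>Relations: the first two make the free algebra on the set H into T(H);
  the rest are the defining relations of H_par.\<close>
definition par_rels :: "('k::field \<Rightarrow> 'h::ring_1 \<Rightarrow> 'h) \<Rightarrow> ('h \<Rightarrow> ('h \<times> 'h) list) \<Rightarrow> ('h \<Rightarrow> 'h)
                        \<Rightarrow> ('h list \<Rightarrow>\<^sub>0 'k) set" where
  "par_rels sc D S =
     {gen (x + y) - gen x - gen y | x y. True} \<union>
     {gen (sc c x) - tsc c (gen x) | c x. True} \<union>
     {gen 1 - tone} \<union>
     {(\<Sum>(a,b)\<leftarrow>D k. tmul (tmul (gen h) (gen a)) (gen (S b)))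
        - (\<Sum>(a,b)\<leftarrow>D k. tmul (gen (h * a)) (gen (S b))) | h k. True} \<union>
     {(\<Sum>(a,b)\<leftarrow>D h. tmul (tmul (gen a) (gen (S b))) (gen k))
        - (\<Sum>(a,b)\<leftarrow>D h. tmul (gen a) (gen (S b * k))) | h k. True} \<union>
     {(\<Sum>(a,b)\<leftarrow>D k. tmul (tmul (gen h) (gen (S a))) (gen b))
        - (\<Sum>(a,b)\<leftarrow>D k. tmul (gen (h * S a)) (gen b)) | h k. True} \<union>
     {(\<Sum>(a,b)\<leftarrow>D h. tmul (tmul (gen (S a)) (gen b)) (gen k))
        - (\<Sum>(a,b)\<leftarrow>D h. tmul (gen (S a)) (gen (b * k))) | h k. True}"

definition par_ideal where
  "par_ideal sc D S = fspan {tmul (tmul u r) v | u r v. r \<in> par_rels sc D S}"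

type_synonym ('h, 'k) hpar = "('h list \<Rightarrow>\<^sub>0 'k) set"

definition hp_carrier :: "('k::field \<Rightarrow> 'h::ring_1 \<Rightarrow> 'h) \<Rightarrow> ('h \<Rightarrow> ('h \<times> 'h) list) \<Rightarrow> ('h \<Rightarrow> 'h)
     \<Rightarrow> ('h, 'k) hpar set" where
  "hp_carrier sc D S = range (qcl (par_ideal sc D S))"
definition "hp_add sc D S A B = qcl (par_ideal sc D S) (rep A + rep B)"
definition "hp_zero sc D S = qcl (par_ideal sc D S) 0"
definition "hp_sc sc D S c A = qcl (par_ideal sc D S) (tsc c (rep A))"
definition "hp_mul sc D S A B = qcl (par_ideal sc D S) (tmul (rep A) (rep B))"
definition "hp_one sc D S = qcl (par_ideal sc D S) tone"
definition "brk sc D S h = qcl (par_ideal sc D S) (gen h)"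

text \<open>The left H_par-module structure of a partial module: [h1]...[hn] m = pi h1 (... (pi hn m)).\<close>
definition word_act :: "('h \<Rightarrow> 'm \<Rightarrow> 'm) \<Rightarrow> 'h list \<Rightarrow> 'm \<Rightarrow> 'm" where
  "word_act \<pi> w = foldr (\<lambda>h f. \<pi> h \<circ> f) w id"
definition teval :: "('k::field \<Rightarrow> 'm::ab_group_add \<Rightarrow> 'm) \<Rightarrow> ('h \<Rightarrow> 'm \<Rightarrow> 'm) \<Rightarrow> ('h list \<Rightarrow>\<^sub>0 'k) \<Rightarrow> 'm \<Rightarrow> 'm" where
  "teval scM \<pi> p m = (\<Sum>w\<in>Poly_Mapping.keys p. scM (Poly_Mapping.lookup p w) (word_act \<pi> w m))"
definition hp_act :: "('k::field \<Rightarrow> 'm::ab_group_add \<Rightarrow> 'm) \<Rightarrow> ('h \<Rightarrow> 'm \<Rightarrow> 'm) \<Rightarrow> ('h, 'k) hpar \<Rightarrow> 'm \<Rightarrow> 'm" where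
  "hp_act scM \<pi> A m = teval scM \<pi> (rep A) m"

definition "phi sc D S x = (\<lambda>h. hp_mul sc D S (brk sc D S h) x)"
definition hom_act :: "'h::ring_1 \<Rightarrow> ('h \<Rightarrow> 'b) \<Rightarrow> ('h \<Rightarrow> 'b)" where
  "hom_act h f = (\<lambda>k. f (k * h))"
definition "fadd sc D S f g = (\<lambda>k. hp_add sc D S (f k) (g k))"
definition "fzero sc D S = (\<lambda>k::'h. hp_zero sc D S)"
definition "fsc sc D S c f = (\<lambda>k. hp_sc sc D S c (f k))"

text \<open>bsum [(h_i, x_i)] = \<Sum>_i h_i \<triangleright> \<phi>(x_i).\<close>
definition "bsum sc D S l = csum (fadd sc D S) (fzero sc D S) (map (\<lambda>(h, x). hom_act h (phi sc D S x)) l)"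
definition "bvalid sc D S l \<longleftrightarrow> set l \<subseteq> UNIV \<times> hp_carrier sc D S"

definition Hbar where
  "Hbar sc D S = {bsum sc D S l | l. bvalid sc D S l}"

text \<open>Right H_par-action from (i): (\<Sum>_i h_i \<triangleright> \<phi>(x_i)) \<triangleleft> y = \<Sum>_i h_i \<triangleright> \<phi>(x_i y).\<close>
definition "rmul_list sc D S l y = map (\<lambda>(h, x). (h, hp_mul sc D S x y)) l"
definition "ract sc D S f y =
   bsum sc D S (rmul_list sc D S (SOME l. bvalid sc D S l \<and> bsum sc D S l = f) y)"

section \<open>The secondary dilation: Hbar (x)_{H_par} M\<close>

definition "etn f m = Poly_Mapping.single (f, m) (1::'k::field)"

definition ten_rels where
  "ten_rels sc D S scM \<pi> =
     {etn (fadd sc D S f g) m - etn f m - etn g m | f g m. f \<in> Hbar sc D S \<and> g \<in> Hbar sc D S} \<union>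
     {etn f (m + m') - etn f m - etn f m' | f m m'. f \<in> Hbar sc D S} \<union>
     {etn (fsc sc D S c f) m - tsc c (etn f m) | c f m. f \<in> Hbar sc D S} \<union>
     {etn f (scM c m) - tsc c (etn f m) | c f m. f \<in> Hbar sc D S} \<union>
     {etn (ract sc D S f y) m - etn f (hp_act scM \<pi> y m) | f y m.
        f \<in> Hbar sc D S \<and> y \<in> hp_carrier sc D S}"

definition "ten_W sc D S scM \<pi> = fspan (ten_rels sc D S scM \<pi>)"

definition "Nsec sc D S scM \<pi> = {qcl (ten_W sc D S scM \<pi>) p | p. Poly_Mapping.keys p \<subseteq> Hbar sc D S \<times> UNIV}"
definition "nadd sc D S scM \<pi> A B = qcl (ten_W sc D S scM \<pi>) (rep A + rep B)"
definition "nzero sc D S scM \<pi> = qcl (ten_W sc D S scM \<pi>) 0"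
definition "nsc sc D S scM \<pi> c A = qcl (ten_W sc D S scM \<pi>) (tsc c (rep A))"
text \<open>h \<triangleright> (f (x) m) = (h \<triangleright> f) (x) m.\<close>
definition "nact sc D S scM \<pi> h A =
   qcl (ten_W sc D S scM \<pi>) (pmmap (\<lambda>(f, m). (hom_act h f, m)) (rep A))"
text \<open>T (f (x) m) = \<phi>(1) (x) f(1_H) m.\<close>
definition "Tsec sc D S scM \<pi> A =
   qcl (ten_W sc D S scM \<pi>)
     (pmmap (\<lambda>(f, m). (phi sc D S (hp_one sc D S), hp_act scM \<pi> (f 1) m)) (rep A))"
text \<open>\<phi>(m) = \<phi>(1) (x) m.\<close>
definition "phisec sc D S scM \<pi> m = qcl (ten_W sc D S scM \<pi>) (etn (phi sc D S (hp_one sc D S)) m)"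

end

theory Submission
  imports Defs "HOL.Modules"
begin

section \<open>Generic facts on the free vector spaces\<close>

lemma lookup_tsc[simp]: "Poly_Mapping.lookup (tsc c p) k = c * Poly_Mapping.lookup p k"
  unfolding tsc_def by transfer (simp add: when_def)

lemma tsc_module: "module (tsc :: 'k::field \<Rightarrow> ('a \<Rightarrow>\<^sub>0 'k) \<Rightarrow> ('a \<Rightarrow>\<^sub>0 'k))"
  by unfold_locales (auto intro!: poly_mapping_eqI simp: lookup_add algebra_simps)

interpretation tsm: module "tsc :: 'k::field \<Rightarrow> ('a \<Rightarrow>\<^sub>0 'k) \<Rightarrow> ('a \<Rightarrow>\<^sub>0 'k)"
  by (rule tsc_module)

lemma fspan_span: "fspan X = tsm.span X"
  by (simp add: fspan_def tsm.span_explicit)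

lemma keys_tsc: "Poly_Mapping.keys (tsc c p) \<subseteq> Poly_Mapping.keys p"
  by (auto simp: in_keys_iff)

lemma tsc_single: "tsc c (Poly_Mapping.single k v) = Poly_Mapping.single k (c * v)"
  by (rule poly_mapping_eqI) (simp add: lookup_single when_def)

lemma tsc_single1: "tsc c (Poly_Mapping.single k 1) = Poly_Mapping.single k c"
  by (simp add: tsc_single)

definition psum :: "('a \<Rightarrow> 'k::zero \<Rightarrow> 'b::comm_monoid_add) \<Rightarrow> ('a \<Rightarrow>\<^sub>0 'k) \<Rightarrow> 'b" where
  "psum F p = (\<Sum>k\<in>Poly_Mapping.keys p. F k (Poly_Mapping.lookup p k))"

lemma psum_superset:
  assumes "finite A" "Poly_Mapping.keys p \<subseteq> A" "\<And>k. F k 0 = 0"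
  shows "psum F p = (\<Sum>k\<in>A. F k (Poly_Mapping.lookup p k))"
  unfolding psum_def using assms
  by (intro sum.mono_neutral_left) (auto simp: in_keys_iff)

lemma psum_zero[simp]: "psum F 0 = 0"
  by (simp add: psum_def)

lemma psum_add:
  assumes "\<And>k. F k 0 = 0" "\<And>k a b. F k (a + b) = F k a + F k b"
  shows "psum F (p + q) = psum F p + psum F q"
  unfolding psum_def by (rule setsum_keys_plus_distrib) (use assms in auto)

lemma psum_single:
  assumes "\<And>k. F k 0 = 0"
  shows "psum F (Poly_Mapping.single k v) = F k v"
  using assms by (cases "v = 0") (simp_all add: psum_def)

lemma psum_tsc:
  assumes "\<And>k. F k 0 = 0"
  shows "psum F (tsc c p) = psum (\<lambda>k a. F k (c * a)) p"
proof -
  have "psum F (tsc c p) = (\<Sum>k\<in>Poly_Mapping.keys p. F k (Poly_Mapping.lookup (tsc c p) k))"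
    by (rule psum_superset) (use assms keys_tsc[of c p] in auto)
  then show ?thesis by (simp add: psum_def)
qed

lemma psum_plusF: "psum (\<lambda>k a. F k a + G k a) p = psum F p + psum G p"
  by (simp add: psum_def sum.distrib)

lemma psum_sumF: "psum (\<lambda>k a. \<Sum>i\<in>I. F i k a) p = (\<Sum>i\<in>I. psum (F i) p)"
  by (simp add: psum_def sum.swap[of _ I])

lemma psum_sum:
  assumes "\<And>k. F k 0 = 0" "\<And>k a b. F k (a + b) = F k a + F k b"
  shows "psum F (\<Sum>i\<in>I. p i) = (\<Sum>i\<in>I. psum F (p i))"
  by (induction I rule: infinite_finite_induct) (simp_all add: psum_add[OF assms])

lemma psum_sum_list:
  assumes "\<And>k. F k 0 = 0" "\<And>k a b. F k (a + b) = F k a + F k b"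
  shows "psum F (sum_list (map p l)) = sum_list (map (\<lambda>i. psum F (p i)) l)"
  by (induction l) (simp_all add: psum_add[OF assms])

lemma psum_expand: "psum Poly_Mapping.single p = p"
  by (rule poly_mapping_eqI) (simp add: psum_def lookup_sum lookup_single when_def in_keys_iff)

lemma psum_cong: "(\<And>k. k \<in> Poly_Mapping.keys p \<Longrightarrow> F k (Poly_Mapping.lookup p k) = G k (Poly_Mapping.lookup p k))
   \<Longrightarrow> psum F p = psum G p"
  by (simp add: psum_def)

section \<open>Linear maps between free spaces, quotients\<close>

definition lin :: "(('a \<Rightarrow>\<^sub>0 'k::field) \<Rightarrow> ('b \<Rightarrow>\<^sub>0 'k)) \<Rightarrow> bool" where
  "lin L \<longleftrightarrow> (\<forall>p q. L (p + q) = L p + L q) \<and> (\<forall>c p. L (tsc c p) = tsc c (L p))"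

lemma lin_add: "lin L \<Longrightarrow> L (p + q) = L p + L q" by (simp add: lin_def)
lemma lin_tsc: "lin L \<Longrightarrow> L (tsc c p) = tsc c (L p)" by (simp add: lin_def)
lemma lin_zero: "lin L \<Longrightarrow> L 0 = 0"
  using lin_add[of L 0 0] by simp
lemma lin_minus: "lin L \<Longrightarrow> L (- p) = - L p"
  using lin_add[of L p "-p"] lin_zero[of L] by (metis add.commute add_uminus_conv_diff eq_diff_eq right_minus zero_diff)
lemma lin_diff: "lin L \<Longrightarrow> L (p - q) = L p - L q"
  using lin_add[of L p "-q"] lin_minus[of L q] by simp
lemma lin_sum: "lin L \<Longrightarrow> L (\<Sum>i\<in>I. f i) = (\<Sum>i\<in>I. L (f i))"
  by (induction I rule: infinite_finite_induct) (simp_all add: lin_zero lin_add)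
lemma lin_sum_list: "lin L \<Longrightarrow> L (sum_list (map f l)) = sum_list (map (\<lambda>i. L (f i)) l)"
  by (induction l) (simp_all add: lin_zero lin_add)

lemma lin_span:
  assumes "lin L" "\<And>r. r \<in> X \<Longrightarrow> L r \<in> fspan Y" "p \<in> fspan X"
  shows "L p \<in> fspan Y"
  using assms(3) unfolding fspan_span
proof (induction rule: tsm.span_induct_alt)
  case base then show ?case using assms(1) by (simp add: lin_zero tsm.span_zero)
next
  case (step c x y)
  have "L x \<in> tsm.span Y" using assms(2)[OF step(1)] by (simp add: fspan_span)
  then show ?case using step assms(1) by (simp add: lin_add lin_tsc tsm.span_add tsm.span_scale)
qed

lemma expand_single: "p = (\<Sum>k\<in>Poly_Mapping.keys p. tsc (Poly_Mapping.lookup p k) (Poly_Mapping.single k 1))"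
  using psum_expand[of p] by (simp add: psum_def tsc_single)

lemma lin_expand: "lin L \<Longrightarrow>
   L p = (\<Sum>k\<in>Poly_Mapping.keys p. tsc (Poly_Mapping.lookup p k) (L (Poly_Mapping.single k 1)))"
  by (subst expand_single) (simp add: lin_sum lin_tsc)

lemma lin_eqI:
  assumes "lin L" "lin L'" "\<And>k. k \<in> Poly_Mapping.keys p \<Longrightarrow> L (Poly_Mapping.single k 1) = L' (Poly_Mapping.single k 1)"
  shows "L p = L' p"
proof -
  have "L p = (\<Sum>k\<in>Poly_Mapping.keys p. tsc (Poly_Mapping.lookup p k) (L (Poly_Mapping.single k 1)))"
    by (rule lin_expand[OF assms(1)])
  also have "\<dots> = (\<Sum>k\<in>Poly_Mapping.keys p. tsc (Poly_Mapping.lookup p k) (L' (Poly_Mapping.single k 1)))"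
    using assms(3) by (intro sum.cong) auto
  also have "\<dots> = L' p" by (rule lin_expand[OF assms(2), symmetric])
  finally show ?thesis .
qed

lemma lin_expand_span:
  assumes "lin L" "lin L'" "\<And>k. k \<in> Poly_Mapping.keys p \<Longrightarrow>
     L (Poly_Mapping.single k 1) - L' (Poly_Mapping.single k 1) \<in> fspan Y"
  shows "L p - L' p \<in> fspan Y"
proof -
  have "L p - L' p = (\<Sum>k\<in>Poly_Mapping.keys p. tsc (Poly_Mapping.lookup p k)
         (L (Poly_Mapping.single k 1) - L' (Poly_Mapping.single k 1)))"
    by (subst (1 2) lin_expand[OF assms(1)], subst (1 2) lin_expand[OF assms(2)])
      (simp add: tsm.scale_right_diff_distrib sum_subtractf)
  also have "\<dots> \<in> fspan Y" unfolding fspan_span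
    by (rule tsm.span_sum, rule tsm.span_scale) (use assms(3) in \<open>simp add: fspan_span\<close>)
  finally show ?thesis .
qed

lemma pmmap_psum: "pmmap g p = psum (\<lambda>k v. Poly_Mapping.single (g k) v) p"
  by (simp add: pmmap_def psum_def)

lemma lin_pmmap: "lin (pmmap g)"
proof -
  have a: "pmmap g (p + q) = pmmap g p + pmmap g q" for p q
    unfolding pmmap_psum by (rule psum_add) (simp_all add: single_add)
  have b: "pmmap g (tsc c p) = tsc c (pmmap g p)" for c p
    unfolding pmmap_psum by (simp add: psum_tsc) (simp add: psum_def tsm.scale_sum_right tsc_single)
  show ?thesis unfolding lin_def using a b by blast
qed

lemma pmmap_single[simp]: "pmmap g (Poly_Mapping.single k v) = Poly_Mapping.single (g k) v"
  by (simp add: pmmap_psum psum_single)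

lemma lin_comp: "lin L \<Longrightarrow> lin L' \<Longrightarrow> lin (\<lambda>p. L (L' p))"
  by (simp add: lin_def)

lemma lin_id: "lin (\<lambda>p. p)"
  by (simp add: lin_def)

lemma pmmap_comp: "pmmap g (pmmap g' p) = pmmap (g \<circ> g') p"
proof (rule lin_eqI[where L = "\<lambda>p. pmmap g (pmmap g' p)"])
  show "lin (\<lambda>p. pmmap g (pmmap g' p))" by (rule lin_comp[OF lin_pmmap lin_pmmap])
qed (simp_all add: lin_pmmap)

lemma pmmap_id: "pmmap (\<lambda>x. x) p = p"
proof (rule lin_eqI[where L' = "\<lambda>x. x"])
qed (simp_all add: lin_pmmap lin_id)

lemma keys_pmmap: "Poly_Mapping.keys (pmmap g p) \<subseteq> g ` Poly_Mapping.keys p"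
proof -
  have "Poly_Mapping.keys (pmmap g p) \<subseteq> (\<Union>k\<in>Poly_Mapping.keys p. Poly_Mapping.keys (Poly_Mapping.single (g k) (Poly_Mapping.lookup p k)))"
    unfolding pmmap_def by (rule keys_sum)
  also have "\<dots> \<subseteq> g ` Poly_Mapping.keys p" by auto
  finally show ?thesis .
qed

lemma fspan_zero: "0 \<in> fspan X" by (simp add: fspan_span tsm.span_zero)
lemma fspan_add: "a \<in> fspan X \<Longrightarrow> b \<in> fspan X \<Longrightarrow> a + b \<in> fspan X" by (simp add: fspan_span tsm.span_add)
lemma fspan_diff: "a \<in> fspan X \<Longrightarrow> b \<in> fspan X \<Longrightarrow> a - b \<in> fspan X" by (simp add: fspan_span tsm.span_diff)
lemma fspan_neg: "a \<in> fspan X \<Longrightarrow> - a \<in> fspan X" by (simp add: fspan_span tsm.span_neg)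
lemma fspan_tsc: "a \<in> fspan X \<Longrightarrow> tsc c a \<in> fspan X" by (simp add: fspan_span tsm.span_scale)
lemma fspan_base: "a \<in> X \<Longrightarrow> a \<in> fspan X" by (simp add: fspan_span tsm.span_base)
lemma fspan_sum: "(\<And>i. i \<in> I \<Longrightarrow> f i \<in> fspan X) \<Longrightarrow> (\<Sum>i\<in>I. f i) \<in> fspan X"
  by (simp add: fspan_span tsm.span_sum)
lemma fspan_sum_list: "(\<And>i. i \<in> set l \<Longrightarrow> f i \<in> fspan X) \<Longrightarrow> sum_list (map f l) \<in> fspan X"
  by (induction l) (auto simp: fspan_zero fspan_add)

lemma qcl_eq: "qcl (fspan X) p = qcl (fspan X) q \<longleftrightarrow> p - q \<in> fspan X"
proof
  assume "qcl (fspan X) p = qcl (fspan X) q"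
  moreover have "p \<in> qcl (fspan X) p" by (simp add: qcl_def fspan_span tsm.span_zero)
  ultimately show "p - q \<in> fspan X" by (simp add: qcl_def)
next
  assume a: "p - q \<in> fspan X"
  have "y - p \<in> fspan X \<longleftrightarrow> y - q \<in> fspan X" for y
  proof
    assume "y - p \<in> fspan X"
    from fspan_add[OF this a] show "y - q \<in> fspan X" by simp
  next
    assume "y - q \<in> fspan X"
    from fspan_diff[OF this a] show "y - p \<in> fspan X" by simp
  qed
  then show "qcl (fspan X) p = qcl (fspan X) q" by (auto simp: qcl_def)
qed

lemma rep_qcl: "rep (qcl (fspan X) p) - p \<in> fspan X"
proof -
  have "p \<in> qcl (fspan X) p" by (simp add: qcl_def fspan_span tsm.span_zero)
  then have "rep (qcl (fspan X) p) \<in> qcl (fspan X) p" unfolding rep_def by (rule someI)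
  then show ?thesis by (simp add: qcl_def)
qed

lemma qcl_rep[simp]: "qcl (fspan X) (rep (qcl (fspan X) p)) = qcl (fspan X) p"
  using rep_qcl qcl_eq by blast

lemma qcl_add: "qcl (fspan X) (rep (qcl (fspan X) p) + rep (qcl (fspan X) q)) = qcl (fspan X) (p + q)"
proof -
  have "(rep (qcl (fspan X) p) - p) + (rep (qcl (fspan X) q) - q) \<in> fspan X"
    by (intro fspan_add rep_qcl)
  then show ?thesis by (simp add: qcl_eq algebra_simps)
qed

lemma qcl_tsc: "qcl (fspan X) (tsc c (rep (qcl (fspan X) p))) = qcl (fspan X) (tsc c p)"
proof -
  have "tsc c (rep (qcl (fspan X) p) - p) \<in> fspan X"
    by (intro fspan_tsc rep_qcl)
  then show ?thesis by (simp add: qcl_eq tsm.scale_right_diff_distrib)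
qed

lemma qcl_lin:
  assumes "lin L" "\<And>r. r \<in> X \<Longrightarrow> L r \<in> fspan Y"
  shows "qcl (fspan Y) (L (rep (qcl (fspan X) p))) = qcl (fspan Y) (L p)"
proof -
  have "L (rep (qcl (fspan X) p) - p) \<in> fspan Y"
    by (rule lin_span[OF assms rep_qcl])
  then show ?thesis by (simp add: qcl_eq lin_diff[OF assms(1)])
qed

lemma qcl_sum_list: "sum_list (map f l) - sum_list (map g l) \<in> fspan X \<longleftrightarrow> True"
  if "\<And>i. i \<in> set l \<Longrightarrow> f i - g i \<in> fspan X"
proof -
  have "sum_list (map f l) - sum_list (map g l) = sum_list (map (\<lambda>i. f i - g i) l)"
    by (induction l) simp_all
  then show ?thesis using fspan_sum_list[of l "\<lambda>i. f i - g i"] that by simp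
qed

section \<open>The tensor algebra\<close>

lemma psum_zeroF: "psum (\<lambda>k a. 0) p = 0"
  by (simp add: psum_def)

lemma tmul_psum: "tmul p q = psum (\<lambda>u a. psum (\<lambda>v b. Poly_Mapping.single (u @ v) (a * b)) q) p"
  by (simp add: tmul_def psum_def)

lemma tmul_add_left: "tmul (p + p') q = tmul p q + tmul p' q"
  unfolding tmul_psum
  by (rule psum_add) (simp_all add: psum_zeroF distrib_right single_add psum_plusF)

lemma tmul_add_right: "tmul p (q + q') = tmul p q + tmul p q'"
  unfolding tmul_psum
  by (subst psum_add) (simp_all add: single_add psum_plusF distrib_left)

lemma tmul_tsc_left: "tmul (tsc c p) q = tsc c (tmul p q)"
  unfolding tmul_psum
  by (simp add: psum_tsc psum_zeroF) (simp add: psum_def tsm.scale_sum_right tsc_single mult.assoc)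

lemma tmul_tsc_right: "tmul p (tsc c q) = tsc c (tmul p q)"
  unfolding tmul_psum
  by (simp add: psum_tsc psum_zeroF) (simp add: psum_def tsm.scale_sum_right tsc_single mult.left_commute)

lemma lin_tmul_left: "lin (\<lambda>p. tmul p q)"
  by (simp add: lin_def tmul_add_left tmul_tsc_left)

lemma lin_tmul_right: "lin (\<lambda>q. tmul p q)"
  by (simp add: lin_def tmul_add_right tmul_tsc_right)

lemma tmul_single: "tmul (Poly_Mapping.single u a) (Poly_Mapping.single v b) = Poly_Mapping.single (u @ v) (a * b)"
  unfolding tmul_psum by (simp add: psum_single psum_zeroF)

lemma tmul_zero_left[simp]: "tmul 0 q = 0" by (simp add: tmul_def)
lemma tmul_zero_right[simp]: "tmul p 0 = 0" by (simp add: tmul_def)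

lemma tmul_assoc: "tmul (tmul p q) r = tmul p (tmul q r)"
proof (rule lin_eqI[where L = "\<lambda>p. tmul (tmul p q) r" and L' = "\<lambda>p. tmul p (tmul q r)"])
  show "lin (\<lambda>p. tmul (tmul p q) r)" by (rule lin_comp[OF lin_tmul_left lin_tmul_left])
  show "lin (\<lambda>p. tmul p (tmul q r))" by (rule lin_tmul_left)
  fix u :: "'a list" and c
  show "tmul (tmul (Poly_Mapping.single u 1) q) r = tmul (Poly_Mapping.single u 1) (tmul q r)"
  proof (rule lin_eqI[where L = "\<lambda>q. tmul (tmul (Poly_Mapping.single u 1) q) r"
        and L' = "\<lambda>q. tmul (Poly_Mapping.single u 1) (tmul q r)"])
    show "lin (\<lambda>q. tmul (tmul (Poly_Mapping.single u 1) q) r)" by (rule lin_comp[OF lin_tmul_left lin_tmul_right])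
    show "lin (\<lambda>q. tmul (Poly_Mapping.single u 1) (tmul q r))" by (rule lin_comp[OF lin_tmul_right lin_tmul_left])
    fix v :: "'a list"
    show "tmul (tmul (Poly_Mapping.single u 1) (Poly_Mapping.single v 1)) r =
          tmul (Poly_Mapping.single u 1) (tmul (Poly_Mapping.single v 1) r)"
    proof (rule lin_eqI[where L = "\<lambda>r. tmul (tmul (Poly_Mapping.single u 1) (Poly_Mapping.single v 1)) r"
        and L' = "\<lambda>r. tmul (Poly_Mapping.single u 1) (tmul (Poly_Mapping.single v 1) r)"])
      show "lin (\<lambda>r. tmul (tmul (Poly_Mapping.single u 1) (Poly_Mapping.single v 1)) r)" by (rule lin_tmul_right)
      show "lin (\<lambda>r. tmul (Poly_Mapping.single u 1) (tmul (Poly_Mapping.single v 1) r))"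
        by (rule lin_comp[OF lin_tmul_right lin_tmul_right])
    qed (simp add: tmul_single)
  qed
qed

lemma tmul_tone_left[simp]: "tmul tone p = p"
  unfolding tmul_psum tone_def by (simp add: psum_single psum_zeroF psum_expand)

lemma tmul_tone_right[simp]: "tmul p tone = p"
  unfolding tmul_psum tone_def
  by (subst psum_cong[where G = "\<lambda>u a. Poly_Mapping.single u a"]) (simp_all add: psum_single psum_expand)

lemma tmul_sum_list_left: "tmul (sum_list (map f l)) q = sum_list (map (\<lambda>i. tmul (f i) q) l)"
  using lin_sum_list[OF lin_tmul_left] .

lemma tmul_sum_list_right: "tmul p (sum_list (map f l)) = sum_list (map (\<lambda>i. tmul p (f i)) l)"
  using lin_sum_list[OF lin_tmul_right] .

lemma tmul_diff_left: "tmul (p - p') q = tmul p q - tmul p' q"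
  using lin_diff[OF lin_tmul_left] .

lemma tmul_diff_right: "tmul p (q - q') = tmul p q - tmul p q'"
  using lin_diff[OF lin_tmul_right] .

lemma csum_plus: "csum (+) 0 xs = sum_list xs"
  by (simp add: csum_def sum_list.eq_foldr)

definition XIg :: "('k::field \<Rightarrow> 'h::ring_1 \<Rightarrow> 'h) \<Rightarrow> ('h \<Rightarrow> ('h \<times> 'h) list) \<Rightarrow> ('h \<Rightarrow> 'h)
   \<Rightarrow> ('h list \<Rightarrow>\<^sub>0 'k) set" where
  "XIg sc D S = {tmul (tmul u r) v | u r v. r \<in> par_rels sc D S}"

locale setting =
  fixes sc :: "'k::field \<Rightarrow> 'h::ring_1 \<Rightarrow> 'h" and D :: "'h \<Rightarrow> ('h \<times> 'h) list" and S :: "'h \<Rightarrow> 'h"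
    and scM :: "'k \<Rightarrow> 'm::ab_group_add \<Rightarrow> 'm" and \<pi> :: "'h \<Rightarrow> 'm \<Rightarrow> 'm"
  assumes sc_mult1: "\<And>c x y. sc c (x * y) = sc c x * y"
    and sc_mult2: "\<And>c x y. sc c (x * y) = x * sc c y"
    and pm: "pmod sc D S UNIV (+) 0 scM \<pi>"
begin

abbreviation "XI \<equiv> XIg sc D S"
abbreviation "Q \<equiv> qcl (fspan XI)"

lemma par_ideal_eq: "par_ideal sc D S = fspan XI"
  by (simp add: par_ideal_def XIg_def)

lemma ideal_left: "p \<in> fspan XI \<Longrightarrow> tmul q p \<in> fspan XI"
proof (rule lin_span[OF lin_tmul_right])
  fix r assume "r \<in> XI"
  then obtain u r0 v where "r = tmul (tmul u r0) v" "r0 \<in> par_rels sc D S" by (auto simp: XIg_def)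
  then have "tmul q r = tmul (tmul (tmul q u) r0) v" by (simp add: tmul_assoc)
  then show "tmul q r \<in> fspan XI" using \<open>r0 \<in> _\<close> by (intro fspan_base) (auto simp: XIg_def)
qed

lemma ideal_right: "p \<in> fspan XI \<Longrightarrow> tmul p q \<in> fspan XI"
proof (rule lin_span[OF lin_tmul_left])
  fix r assume "r \<in> XI"
  then obtain u r0 v where "r = tmul (tmul u r0) v" "r0 \<in> par_rels sc D S" by (auto simp: XIg_def)
  then have "tmul r q = tmul (tmul u r0) (tmul v q)" by (simp add: tmul_assoc)
  then show "tmul r q \<in> fspan XI" using \<open>r0 \<in> _\<close> by (intro fspan_base) (auto simp: XIg_def)
qed

lemma rel_in_I: "r \<in> par_rels sc D S \<Longrightarrow> r \<in> fspan XI"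
  unfolding XIg_def by (rule fspan_base) (metis (mono_tags, lifting) mem_Collect_eq tmul_tone_left tmul_tone_right)

lemma Q_add: "hp_add sc D S (Q p) (Q q) = Q (p + q)"
  by (simp add: hp_add_def par_ideal_eq qcl_add)

lemma Q_sc: "hp_sc sc D S c (Q p) = Q (tsc c p)"
  by (simp add: hp_sc_def par_ideal_eq qcl_tsc)

lemma Q_mul: "hp_mul sc D S (Q p) (Q q) = Q (tmul p q)"
proof -
  let ?a = "rep (Q p)" and ?b = "rep (Q q)"
  have "tmul ?a ?b - tmul p q = tmul (?a - p) ?b + tmul p (?b - q)"
    by (simp add: tmul_diff_left tmul_diff_right)
  also have "\<dots> \<in> fspan XI"
    by (intro fspan_add ideal_left ideal_right rep_qcl)
  finally show ?thesis by (simp add: hp_mul_def par_ideal_eq qcl_eq)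
qed

lemma Q_zero: "hp_zero sc D S = Q 0" by (simp add: hp_zero_def par_ideal_eq)
lemma Q_one: "hp_one sc D S = Q tone" by (simp add: hp_one_def par_ideal_eq)
lemma Q_brk: "brk sc D S h = Q (gen h)" by (simp add: brk_def par_ideal_eq)
lemma hp_carrier_eq: "hp_carrier sc D S = range Q" by (simp add: hp_carrier_def par_ideal_eq)
lemma Q_rep: "x \<in> hp_carrier sc D S \<Longrightarrow> Q (rep x) = x"
  by (auto simp: hp_carrier_eq)
lemma Q_in[simp]: "Q p \<in> hp_carrier sc D S" by (simp add: hp_carrier_eq)

lemma Q_eqI: "p - q \<in> fspan XI \<Longrightarrow> Q p = Q q" by (simp add: qcl_eq)

lemma Q_cong_add: "Q p = Q p' \<Longrightarrow> Q q = Q q' \<Longrightarrow> Q (p + q) = Q (p' + q')"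
  using Q_add[of p q] Q_add[of p' q'] by simp
lemma Q_cong_tsc: "Q p = Q p' \<Longrightarrow> Q (tsc c p) = Q (tsc c p')"
  using Q_sc[of c p] Q_sc[of c p'] by simp
lemma Q_cong_mul: "Q p = Q p' \<Longrightarrow> Q q = Q q' \<Longrightarrow> Q (tmul p q) = Q (tmul p' q')"
  using Q_mul[of p q] Q_mul[of p' q'] by simp
lemma Q_cong_sum_list: "(\<And>i. i \<in> set l \<Longrightarrow> Q (f i) = Q (g i)) \<Longrightarrow>
    Q (sum_list (map f l)) = Q (sum_list (map g l))"
proof (induction l)
  case (Cons a l)
  then have "Q (f a) = Q (g a)" "Q (sum_list (map f l)) = Q (sum_list (map g l))" by auto
  then have "Q (f a + sum_list (map f l)) = Q (g a + sum_list (map g l))" by (rule Q_cong_add)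
  then show ?case by simp
qed simp

lemma gen_add: "Q (gen (x + y)) = Q (gen x + gen y)"
proof (rule Q_eqI)
  have "gen (x + y) - gen x - gen y \<in> par_rels sc D S" unfolding par_rels_def by (rule UnI1)+ blast
  from rel_in_I[OF this] show "gen (x + y) - (gen x + gen y) \<in> fspan XI" by (simp add: diff_diff_eq)
qed

lemma gen_sc: "Q (gen (sc c x)) = Q (tsc c (gen x))"
proof (rule Q_eqI)
  have "gen (sc c x) - tsc c (gen x) \<in> par_rels sc D S" unfolding par_rels_def by (rule UnI1, rule UnI1, rule UnI1, rule UnI1, rule UnI1, rule UnI2) blast
  from rel_in_I[OF this] show "gen (sc c x) - tsc c (gen x) \<in> fspan XI" .
qed

lemma gen_one: "Q (gen 1) = Q tone"
proof (rule Q_eqI)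
  have "gen 1 - tone \<in> par_rels sc D S" unfolding par_rels_def by (rule UnI1, rule UnI1, rule UnI1, rule UnI1, rule UnI2) blast
  from rel_in_I[OF this] show "gen 1 - tone \<in> fspan XI" .
qed

lemma rel2: "Q (\<Sum>(a,b)\<leftarrow>D k. tmul (tmul (gen h) (gen a)) (gen (S b)))
           = Q (\<Sum>(a,b)\<leftarrow>D k. tmul (gen (h * a)) (gen (S b)))"
proof (rule Q_eqI, rule rel_in_I)
  show "(\<Sum>(a,b)\<leftarrow>D k. tmul (tmul (gen h) (gen a)) (gen (S b))) - (\<Sum>(a,b)\<leftarrow>D k. tmul (gen (h * a)) (gen (S b)))
     \<in> par_rels sc D S" unfolding par_rels_def by (rule UnI1, rule UnI1, rule UnI1, rule UnI2) blast
qed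

lemma rel3: "Q (\<Sum>(a,b)\<leftarrow>D h. tmul (tmul (gen a) (gen (S b))) (gen k))
           = Q (\<Sum>(a,b)\<leftarrow>D h. tmul (gen a) (gen (S b * k)))"
proof (rule Q_eqI, rule rel_in_I)
  show "(\<Sum>(a,b)\<leftarrow>D h. tmul (tmul (gen a) (gen (S b))) (gen k)) - (\<Sum>(a,b)\<leftarrow>D h. tmul (gen a) (gen (S b * k)))
     \<in> par_rels sc D S" unfolding par_rels_def by (rule UnI1, rule UnI1, rule UnI2) blast
qed

end


context setting
begin

lemma M_module: "module scM"
  using pm unfolding pmod_def cvs_def by unfold_locales auto

end

sublocale setting \<subseteq> M: module scM by (rule M_module)

context setting
begin

lemma pi_add_m: "\<pi> h (m + m') = \<pi> h m + \<pi> h m'"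
  using pm by (simp add: pmod_def clin_def)
lemma pi_sc_m: "\<pi> h (scM c m) = scM c (\<pi> h m)"
  using pm by (simp add: pmod_def clin_def)
lemma pi_add_h: "\<pi> (h + k) m = \<pi> h m + \<pi> k m"
  using pm by (simp add: pmod_def)
lemma pi_sc_h: "\<pi> (sc c h) m = scM c (\<pi> h m)"
  using pm by (simp add: pmod_def)
lemma pi_one: "\<pi> 1 m = m"
  using pm by (simp add: pmod_def)
lemma pi_ax2: "(\<Sum>(a,b)\<leftarrow>D k. \<pi> h (\<pi> a (\<pi> (S b) v))) = (\<Sum>(a,b)\<leftarrow>D k. \<pi> (h * a) (\<pi> (S b) v))"
  using pm unfolding pmod_def csum_plus by simp
lemma pi_ax3: "(\<Sum>(a,b)\<leftarrow>D h. \<pi> a (\<pi> (S b) (\<pi> k v))) = (\<Sum>(a,b)\<leftarrow>D h. \<pi> a (\<pi> (S b * k) v))"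
  using pm unfolding pmod_def csum_plus by simp
lemma pi_ax4: "(\<Sum>(a,b)\<leftarrow>D k. \<pi> h (\<pi> (S a) (\<pi> b v))) = (\<Sum>(a,b)\<leftarrow>D k. \<pi> (h * S a) (\<pi> b v))"
  using pm unfolding pmod_def csum_plus by simp
lemma pi_ax5: "(\<Sum>(a,b)\<leftarrow>D h. \<pi> (S a) (\<pi> b (\<pi> k v))) = (\<Sum>(a,b)\<leftarrow>D h. \<pi> (S a) (\<pi> (b * k) v))"
  using pm unfolding pmod_def csum_plus by simp

lemma pi_zero_m: "\<pi> h 0 = 0"
  using pi_add_m[of h 0 0] by simp

lemma pi_sum_m: "\<pi> h (\<Sum>i\<in>A. f i) = (\<Sum>i\<in>A. \<pi> h (f i))"
  by (induction A rule: infinite_finite_induct) (simp_all add: pi_zero_m pi_add_m)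

lemma word_act_nil[simp]: "word_act \<pi> [] = id"
  by (simp add: word_act_def)
lemma word_act_cons[simp]: "word_act \<pi> (h # w) m = \<pi> h (word_act \<pi> w m)"
  by (simp add: word_act_def)
lemma word_act_append: "word_act \<pi> (u @ v) m = word_act \<pi> u (word_act \<pi> v m)"
  by (induction u) simp_all
lemma word_act_add: "word_act \<pi> w (m + m') = word_act \<pi> w m + word_act \<pi> w m'"
  by (induction w) (simp_all add: pi_add_m)
lemma word_act_sc: "word_act \<pi> w (scM c m) = scM c (word_act \<pi> w m)"
  by (induction w) (simp_all add: pi_sc_m)
lemma word_act_zero: "word_act \<pi> w 0 = 0"
  using word_act_add[of w 0 0] by simp
lemma word_act_sum: "word_act \<pi> w (\<Sum>i\<in>A. f i) = (\<Sum>i\<in>A. word_act \<pi> w (f i))"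
  by (induction A rule: infinite_finite_induct) (simp_all add: word_act_zero word_act_add)

abbreviation "tev \<equiv> teval scM \<pi>"

lemma teval_psum: "tev p m = psum (\<lambda>w v. scM v (word_act \<pi> w m)) p"
  by (simp add: teval_def psum_def)

lemma teval_add: "tev (p + q) m = tev p m + tev q m"
  unfolding teval_psum by (rule psum_add) (simp_all add: M.scale_left_distrib)

lemma teval_zero[simp]: "tev 0 m = 0"
  by (simp add: teval_def)

lemma teval_tsc: "tev (tsc c p) m = scM c (tev p m)"
  unfolding teval_psum by (simp add: psum_tsc) (simp add: psum_def M.scale_sum_right)

lemma teval_minus: "tev (- p) m = - tev p m"
  using teval_add[of p "-p" m] by (simp add: eq_neg_iff_add_eq_0 add.commute)

lemma teval_diff: "tev (p - q) m = tev p m - tev q m"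
  using teval_add[of p "-q" m] teval_minus[of q m] by simp

lemma teval_sum: "tev (\<Sum>i\<in>A. f i) m = (\<Sum>i\<in>A. tev (f i) m)"
  by (induction A rule: infinite_finite_induct) (simp_all add: teval_add)

lemma teval_sum_list: "tev (sum_list (map f l)) m = sum_list (map (\<lambda>i. tev (f i) m) l)"
  by (induction l) (simp_all add: teval_add)

lemma teval_sum_list2: "tev (\<Sum>(a,b)\<leftarrow>l. f a b) m = (\<Sum>(a,b)\<leftarrow>l. tev (f a b) m)"
  by (induction l) (auto simp: teval_add)

lemma teval_single: "tev (Poly_Mapping.single w a) m = scM a (word_act \<pi> w m)"
  unfolding teval_psum by (simp add: psum_single)

lemma teval_add_m: "tev p (m + m') = tev p m + tev p m'"
  unfolding teval_psum by (simp add: word_act_add M.scale_right_distrib psum_plusF)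

lemma teval_sc_m: "tev p (scM c m) = scM c (tev p m)"
  unfolding teval_psum by (simp add: psum_def word_act_sc M.scale_sum_right mult.commute)

lemma teval_zero_m: "tev p 0 = 0"
  using teval_add_m[of p 0 0] by simp

lemma teval_sum_m: "tev p (\<Sum>i\<in>A. f i) = (\<Sum>i\<in>A. tev p (f i))"
  by (induction A rule: infinite_finite_induct) (simp_all add: teval_zero_m teval_add_m)

lemma teval_expand: "tev p m = (\<Sum>k\<in>Poly_Mapping.keys p. scM (Poly_Mapping.lookup p k) (word_act \<pi> k m))"
  by (simp add: teval_psum psum_def)

lemma teval_tmul: "tev (tmul p q) m = tev p (tev q m)"
proof -
  have e1: "tmul p q = (\<Sum>u\<in>Poly_Mapping.keys p. tsc (Poly_Mapping.lookup p u) (tmul (Poly_Mapping.single u 1) q))"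
    by (rule lin_expand[OF lin_tmul_left])
  have e2: "tmul (Poly_Mapping.single u 1) q = (\<Sum>v\<in>Poly_Mapping.keys q. tsc (Poly_Mapping.lookup q v) (Poly_Mapping.single (u @ v) 1))" for u
    by (subst lin_expand[OF lin_tmul_right]) (simp add: tmul_single)
  have "tev (tmul p q) m = (\<Sum>u\<in>Poly_Mapping.keys p. scM (Poly_Mapping.lookup p u)
        (\<Sum>v\<in>Poly_Mapping.keys q. scM (Poly_Mapping.lookup q v) (word_act \<pi> (u @ v) m)))"
    by (simp add: e1 e2 teval_sum teval_tsc teval_single)
  also have "\<dots> = tev p (tev q m)"
    by (simp add: teval_expand[of p] teval_expand[of q] word_act_sum word_act_sc word_act_append)
  finally show ?thesis .
qed

lemma teval_tone[simp]: "tev tone m = m"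
  by (simp add: tone_def teval_single)

lemma teval_gen[simp]: "tev (gen h) m = \<pi> h m"
  by (simp add: gen_def teval_single)

lemma teval_rels: "r \<in> par_rels sc D S \<Longrightarrow> tev r m = 0"
  unfolding par_rels_def
  by (auto simp: teval_diff teval_add teval_tsc teval_sum_list2 teval_tmul pi_add_h pi_sc_h pi_one
           pi_ax2 pi_ax3 pi_ax4 pi_ax5)

lemma teval_I: "p \<in> fspan XI \<Longrightarrow> tev p m = 0"
proof -
  assume "p \<in> fspan XI"
  then have "p \<in> tsm.span XI" by (simp add: fspan_span)
  then have "\<forall>m. tev p m = 0"
  proof (induction rule: tsm.span_induct_alt)
    case (step c x y)
    then obtain u r v where "x = tmul (tmul u r) v" "r \<in> par_rels sc D S" by (auto simp: XIg_def)
    then have "tev x m = 0" for m by (simp add: teval_tmul teval_rels teval_zero_m)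
    then show ?case using step by (simp add: teval_add teval_tsc)
  qed simp
  then show ?thesis by simp
qed

lemma hp_act_Q: "hp_act scM \<pi> (Q p) m = tev p m"
proof -
  have "tev (rep (Q p) - p) m = 0" by (rule teval_I[OF rep_qcl])
  then show ?thesis by (simp add: hp_act_def teval_diff)
qed

end


context setting
begin

abbreviation "HB \<equiv> Hbar sc D S"
abbreviation "HP \<equiv> hp_carrier sc D S"

definition bs :: "('h \<times> ('h, 'k) hpar) list \<Rightarrow> 'h \<Rightarrow> ('h list \<Rightarrow>\<^sub>0 'k)" where
  "bs l k = (\<Sum>(h,x)\<leftarrow>l. tmul (gen (k * h)) (rep x))"

lemma bs_Nil[simp]: "bs [] k = 0" by (simp add: bs_def)
lemma bs_Cons[simp]: "bs ((h,x) # l) k = tmul (gen (k * h)) (rep x) + bs l k" by (simp add: bs_def)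
lemma bs_append: "bs (l @ l') k = bs l k + bs l' k" by (simp add: bs_def)

lemma bvalid_Nil[simp]: "bvalid sc D S []" by (simp add: bvalid_def)
lemma bvalid_Cons[simp]: "bvalid sc D S ((h,x) # l) \<longleftrightarrow> x \<in> HP \<and> bvalid sc D S l"
  by (auto simp: bvalid_def)
lemma bvalid_append[simp]: "bvalid sc D S (l @ l') \<longleftrightarrow> bvalid sc D S l \<and> bvalid sc D S l'"
  by (auto simp: bvalid_def)

lemma bsum_Nil: "bsum sc D S [] = fzero sc D S"
  by (simp add: bsum_def csum_def)
lemma bsum_Cons: "bsum sc D S ((h,x) # l) = fadd sc D S (hom_act h (phi sc D S x)) (bsum sc D S l)"
  by (simp add: bsum_def csum_def)

lemma phi_Q: "phi sc D S (Q q) k = Q (tmul (gen k) q)"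
  by (simp add: phi_def Q_brk Q_mul)

lemma bsum_eq: "bvalid sc D S l \<Longrightarrow> bsum sc D S l k = Q (bs l k)"
proof (induction l arbitrary: k)
  case Nil then show ?case by (simp add: bsum_Nil fzero_def Q_zero)
next
  case (Cons a l)
  obtain h x where a: "a = (h, x)" by force
  with Cons have x: "x \<in> HP" and v: "bvalid sc D S l" by auto
  have "bsum sc D S (a # l) k = hp_add sc D S (phi sc D S (Q (rep x)) (k * h)) (Q (bs l k))"
    using Cons.IH[OF v] x by (simp add: a bsum_Cons fadd_def hom_act_def Q_rep)
  also have "\<dots> = Q (bs (a # l) k)" by (simp add: phi_Q Q_add a)
  finally show ?case .
qed

lemma Hbar_iff: "f \<in> HB \<longleftrightarrow> (\<exists>l. bvalid sc D S l \<and> f = bsum sc D S l)"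
  by (auto simp: Hbar_def)

lemma Hbar_val: "f \<in> HB \<Longrightarrow> f k \<in> HP"
  by (auto simp: Hbar_iff bsum_eq)

lemma fzero_in: "fzero sc D S \<in> HB"
  using Hbar_iff bsum_Nil bvalid_Nil by metis

lemma fadd_bsum: "bvalid sc D S l \<Longrightarrow> bvalid sc D S l' \<Longrightarrow>
    fadd sc D S (bsum sc D S l) (bsum sc D S l') = bsum sc D S (l @ l')"
  by (rule ext) (simp add: fadd_def bsum_eq Q_add bs_append)

lemma fadd_in: "f \<in> HB \<Longrightarrow> g \<in> HB \<Longrightarrow> fadd sc D S f g \<in> HB"
  unfolding Hbar_iff using fadd_bsum bvalid_append by metis

lemma Q_rep_Q: "Q (rep (Q p)) = Q p" by simp

lemma tsc_sum_list: "tsc c (sum_list (map f l)) = sum_list (map (\<lambda>i. tsc c (f i)) l)"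
  by (induction l) (simp_all add: tsm.scale_right_distrib)

lemma hp_sc_in[simp]: "hp_sc sc D S c x \<in> HP" by (simp add: hp_sc_def hp_carrier_def)
lemma hp_mul_in[simp]: "hp_mul sc D S x y \<in> HP" by (simp add: hp_mul_def hp_carrier_def)
lemma hp_add_in[simp]: "hp_add sc D S x y \<in> HP" by (simp add: hp_add_def hp_carrier_def)

lemma fsc_bsum: "bvalid sc D S l \<Longrightarrow>
    fsc sc D S c (bsum sc D S l) = bsum sc D S (map (\<lambda>(h,x). (h, hp_sc sc D S c x)) l)"
proof (rule ext)
  fix k assume v: "bvalid sc D S l"
  then have v': "bvalid sc D S (map (\<lambda>(h,x). (h, hp_sc sc D S c x)) l)"
    by (auto simp: bvalid_def)
  have "fsc sc D S c (bsum sc D S l) k = Q (tsc c (bs l k))"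
    by (simp add: fsc_def bsum_eq[OF v] Q_sc)
  also have "\<dots> = Q (bs (map (\<lambda>(h,x). (h, hp_sc sc D S c x)) l) k)"
    using v
  proof (induction l)
    case (Cons a l)
    obtain h x where a: "a = (h, x)" by force
    with Cons have x: "x \<in> HP" and vl: "bvalid sc D S l" by auto
    have "Q (tmul (gen (k * h)) (rep (hp_sc sc D S c x))) = Q (tsc c (tmul (gen (k * h)) (rep x)))"
    proof -
      have "hp_sc sc D S c x = Q (tsc c (rep x))" using Q_sc[of c "rep x"] Q_rep[OF x] by simp
      then have "Q (rep (hp_sc sc D S c x)) = Q (tsc c (rep x))" by simp
      from Q_cong_mul[OF refl this, of "gen (k * h)"] show ?thesis by (simp add: tmul_tsc_right)
    qed
    from Q_cong_add[OF this[symmetric] Cons.IH[OF vl]]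
    show ?case by (simp add: a tsm.scale_right_distrib)
  qed simp
  also have "\<dots> = bsum sc D S (map (\<lambda>(h,x). (h, hp_sc sc D S c x)) l) k"
    by (simp add: bsum_eq[OF v'])
  finally show "fsc sc D S c (bsum sc D S l) k = bsum sc D S (map (\<lambda>(h,x). (h, hp_sc sc D S c x)) l) k" .
qed

lemma fsc_in: "f \<in> HB \<Longrightarrow> fsc sc D S c f \<in> HB"
proof -
  assume "f \<in> HB"
  then obtain l where v: "bvalid sc D S l" and f: "f = bsum sc D S l" by (auto simp: Hbar_iff)
  have v': "bvalid sc D S (map (\<lambda>(h,x). (h, hp_sc sc D S c x)) l)"
    using v by (auto simp: bvalid_def hp_sc_def hp_carrier_def)
  show ?thesis unfolding Hbar_iff f fsc_bsum[OF v] using v' by blast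
qed

lemma hom_act_bsum_pt: "bsum sc D S l (k * h) = bsum sc D S (map (\<lambda>(h',x). (h * h', x)) l) k"
proof (induction l arbitrary: k)
  case Nil then show ?case by (simp add: bsum_Nil fzero_def)
next
  case (Cons a l)
  obtain h' x where a: "a = (h', x)" by force
  show ?case using Cons by (simp add: a bsum_Cons fadd_def hom_act_def mult.assoc)
qed

lemma hom_act_bsum: "hom_act h (bsum sc D S l) = bsum sc D S (map (\<lambda>(h',x). (h * h', x)) l)"
  by (rule ext) (simp add: hom_act_def hom_act_bsum_pt)

lemma hom_act_in: "f \<in> HB \<Longrightarrow> hom_act h f \<in> HB"
proof -
  assume "f \<in> HB"
  then obtain l where v: "bvalid sc D S l" and f: "f = bsum sc D S l" by (auto simp: Hbar_iff)
  have v': "bvalid sc D S (map (\<lambda>(h',x). (h * h', x)) l)"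
    using v by (auto simp: bvalid_def)
  show ?thesis unfolding Hbar_iff f hom_act_bsum using v' by blast
qed

lemma Q_mul_rep: "x \<in> HP \<Longrightarrow> hp_mul sc D S (Q p) x = Q (tmul p (rep x))"
  using Q_mul[of p "rep x"] Q_rep[of x] by simp

lemma phi_bsum: "x \<in> HP \<Longrightarrow> phi sc D S x = bsum sc D S [(1, x)]"
  by (rule ext) (simp add: bsum_eq phi_def Q_brk Q_mul_rep)

lemma phi_in: "x \<in> HP \<Longrightarrow> phi sc D S x \<in> HB"
  unfolding Hbar_iff using phi_bsum by (metis bvalid_Cons bvalid_Nil)

lemma rmul_valid: "bvalid sc D S (rmul_list sc D S l y)"
  by (auto simp: bvalid_def rmul_list_def)

lemma bsum_rmul:
  assumes "bvalid sc D S l" "y \<in> HP"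
  shows "bsum sc D S (rmul_list sc D S l y) k = hp_mul sc D S (bsum sc D S l k) y"
proof -
  have "bsum sc D S (rmul_list sc D S l y) k = Q (bs (rmul_list sc D S l y) k)"
    by (rule bsum_eq[OF rmul_valid])
  also have "\<dots> = Q (tmul (bs l k) (rep y))"
    using assms(1)
  proof (induction l)
    case (Cons a l)
    obtain h x where a: "a = (h, x)" by force
    with Cons have x: "x \<in> HP" and vl: "bvalid sc D S l" by auto
    have "hp_mul sc D S x y = Q (tmul (rep x) (rep y))"
      using Q_mul[of "rep x" "rep y"] Q_rep[OF x] Q_rep[OF assms(2)] by simp
    then have "Q (rep (hp_mul sc D S x y)) = Q (tmul (rep x) (rep y))" by simp
    from Q_cong_mul[OF refl this, of "gen (k * h)"]
    have "Q (tmul (gen (k * h)) (rep (hp_mul sc D S x y))) = Q (tmul (tmul (gen (k * h)) (rep x)) (rep y))"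
      by (simp add: tmul_assoc)
    from Q_cong_add[OF this Cons.IH[OF vl]]
    show ?case by (simp add: a rmul_list_def tmul_add_left)
  qed (simp add: rmul_list_def)
  also have "\<dots> = hp_mul sc D S (bsum sc D S l k) y"
    using assms by (simp add: bsum_eq Q_mul_rep)
  finally show ?thesis .
qed

lemma part1: "bvalid sc D S l \<Longrightarrow> bvalid sc D S l' \<Longrightarrow> y \<in> HP \<Longrightarrow> bsum sc D S l = bsum sc D S l' \<Longrightarrow>
    bsum sc D S (rmul_list sc D S l y) = bsum sc D S (rmul_list sc D S l' y)"
  by (rule ext) (simp add: bsum_rmul)

lemma ract_eq: "f \<in> HB \<Longrightarrow> y \<in> HP \<Longrightarrow> ract sc D S f y = (\<lambda>k. hp_mul sc D S (f k) y)"
proof -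
  assume f: "f \<in> HB" and y: "y \<in> HP"
  let ?l = "SOME l. bvalid sc D S l \<and> bsum sc D S l = f"
  have "\<exists>l. bvalid sc D S l \<and> bsum sc D S l = f" using f by (auto simp: Hbar_iff)
  then have l: "bvalid sc D S ?l \<and> bsum sc D S ?l = f" by (rule someI_ex)
  show ?thesis unfolding ract_def using l y by (auto simp: bsum_rmul)
qed

lemma ract_in: "f \<in> HB \<Longrightarrow> y \<in> HP \<Longrightarrow> ract sc D S f y \<in> HB"
proof -
  assume f: "f \<in> HB" and y: "y \<in> HP"
  then obtain l where v: "bvalid sc D S l" and fl: "f = bsum sc D S l" by (auto simp: Hbar_iff)
  have "ract sc D S f y = bsum sc D S (rmul_list sc D S l y)"
    using f y v by (simp add: ract_eq fl bsum_rmul fun_eq_iff)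
  then show ?thesis using rmul_valid Hbar_iff by metis
qed

end


context setting
begin

lemma HB_rep: "f \<in> HB \<Longrightarrow> \<exists>F. f = (\<lambda>k. Q (F k))"
  by (rule exI[of _ "\<lambda>k. rep (f k)"]) (simp add: Q_rep Hbar_val)

lemma HP_rep: "y \<in> HP \<Longrightarrow> \<exists>a. y = Q a"
  by (auto simp: hp_carrier_eq)

lemma fadd_Q: "fadd sc D S (\<lambda>k. Q (F k)) (\<lambda>k. Q (G k)) = (\<lambda>k. Q (F k + G k))"
  by (simp add: fadd_def Q_add)
lemma fsc_Q: "fsc sc D S c (\<lambda>k. Q (F k)) = (\<lambda>k. Q (tsc c (F k)))"
  by (simp add: fsc_def Q_sc)
lemma fzero_Q: "fzero sc D S = (\<lambda>k. Q 0)"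
  by (simp add: fzero_def Q_zero)

lemma tsc_minus1: "tsc (-1) p = - p"
  by (simp add: tsm.scale_minus_left)

lemma cvs_HB: "cvs HB (fadd sc D S) (fzero sc D S) (fsc sc D S)"
  unfolding cvs_def
proof (intro conjI ballI allI)
  show "fzero sc D S \<in> HB" by (rule fzero_in)
  show "fadd sc D S x y \<in> HB" if "x \<in> HB" "y \<in> HB" for x y using that by (rule fadd_in)
  show "fsc sc D S c x \<in> HB" if "x \<in> HB" for c x using that by (rule fsc_in)
  fix x y w assume x: "x \<in> HB" and y: "y \<in> HB" and w: "w \<in> HB"
  obtain F where F: "x = (\<lambda>k. Q (F k))" using HB_rep[OF x] by blast
  obtain G where G: "y = (\<lambda>k. Q (G k))" using HB_rep[OF y] by blast
  obtain H where H: "w = (\<lambda>k. Q (H k))" using HB_rep[OF w] by blast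
  show "fadd sc D S (fadd sc D S x y) w = fadd sc D S x (fadd sc D S y w)"
    by (simp add: F G H fadd_Q add.assoc)
  show "fadd sc D S x y = fadd sc D S y x"
    by (simp add: F G fadd_Q add.commute)
next
  fix x assume x: "x \<in> HB"
  obtain F where F: "x = (\<lambda>k. Q (F k))" using HB_rep[OF x] by blast
  show "fadd sc D S (fzero sc D S) x = x" by (simp add: F fzero_Q fadd_Q)
  show "\<exists>y\<in>HB. fadd sc D S x y = fzero sc D S"
  proof (rule bexI[of _ "fsc sc D S (-1) x"])
    show "fsc sc D S (-1) x \<in> HB" by (rule fsc_in[OF x])
    show "fadd sc D S x (fsc sc D S (-1) x) = fzero sc D S" by (simp add: F fsc_Q fadd_Q fzero_Q tsc_minus1)
  qed
  show "fsc sc D S 1 x = x" by (simp add: F fsc_Q)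
next
  fix c d x assume x: "x \<in> HB"
  obtain F where F: "x = (\<lambda>k. Q (F k))" using HB_rep[OF x] by blast
  show "fsc sc D S (c + d) x = fadd sc D S (fsc sc D S c x) (fsc sc D S d x)"
    by (simp add: F fsc_Q fadd_Q tsm.scale_left_distrib)
  show "fsc sc D S (c * d) x = fsc sc D S c (fsc sc D S d x)"
    by (simp add: F fsc_Q)
next
  fix c x y assume x: "x \<in> HB" and y: "y \<in> HB"
  obtain F where F: "x = (\<lambda>k. Q (F k))" using HB_rep[OF x] by blast
  obtain G where G: "y = (\<lambda>k. Q (G k))" using HB_rep[OF y] by blast
  show "fsc sc D S c (fadd sc D S x y) = fadd sc D S (fsc sc D S c x) (fsc sc D S c y)"
    by (simp add: F G fsc_Q fadd_Q tsm.scale_right_distrib)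
qed

lemma bs_add: "Q (bs l (a + b)) = Q (bs l a + bs l b)"
proof (induction l)
  case (Cons p l)
  obtain h x where p: "p = (h, x)" by force
  have "Q (gen ((a + b) * h)) = Q (gen (a * h) + gen (b * h))"
    by (simp add: distrib_right gen_add)
  from Q_cong_mul[OF this refl, of "rep x"]
  have "Q (tmul (gen ((a + b) * h)) (rep x)) = Q (tmul (gen (a * h)) (rep x) + tmul (gen (b * h)) (rep x))"
    by (simp add: tmul_add_left)
  from Q_cong_add[OF this Cons.IH] show ?case by (simp add: p algebra_simps)
qed simp

lemma bs_sc: "Q (bs l (sc c a)) = Q (tsc c (bs l a))"
proof (induction l)
  case (Cons p l)
  obtain h x where p: "p = (h, x)" by force
  have "Q (gen (sc c a * h)) = Q (tsc c (gen (a * h)))"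
    by (simp add: sc_mult1[symmetric] gen_sc)
  from Q_cong_mul[OF this refl, of "rep x"]
  have "Q (tmul (gen (sc c a * h)) (rep x)) = Q (tsc c (tmul (gen (a * h)) (rep x)))"
    by (simp add: tmul_tsc_left)
  from Q_cong_add[OF this Cons.IH] show ?case by (simp add: p tsm.scale_right_distrib)
qed simp

lemma Hbar_add: "f \<in> HB \<Longrightarrow> f (a + b) = hp_add sc D S (f a) (f b)"
  by (auto simp: Hbar_iff bsum_eq bs_add Q_add)

lemma Hbar_sc: "f \<in> HB \<Longrightarrow> f (sc c a) = hp_sc sc D S c (f a)"
  by (auto simp: Hbar_iff bsum_eq bs_sc Q_sc)

lemma hmod_HB: "hmod sc HB (fadd sc D S) (fzero sc D S) (fsc sc D S) hom_act"
  unfolding hmod_def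
proof (intro conjI allI ballI)
  show "cvs HB (fadd sc D S) (fzero sc D S) (fsc sc D S)" by (rule cvs_HB)
  show "clin HB (fadd sc D S) (fsc sc D S) HB (fadd sc D S) (fsc sc D S) (hom_act h)" for h
    unfolding clin_def by (auto simp: hom_act_in) (auto simp: hom_act_def fadd_def fsc_def)
  fix h k v assume v: "v \<in> HB"
  show "hom_act (h + k) v = fadd sc D S (hom_act h v) (hom_act k v)"
    by (rule ext) (simp add: hom_act_def fadd_def distrib_left Hbar_add[OF v])
  show "hom_act (h * k) v = hom_act h (hom_act k v)"
    by (rule ext) (simp add: hom_act_def mult.assoc)
next
  fix c h v assume v: "v \<in> HB"
  show "hom_act (sc c h) v = fsc sc D S c (hom_act h v)"
    by (rule ext) (simp add: hom_act_def fsc_def sc_mult2[symmetric] Hbar_sc[OF v])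
next
  fix v :: "'h \<Rightarrow> ('h, 'k) hpar" assume v: "v \<in> HB"
  show "hom_act 1 v = v" by (simp add: hom_act_def)
qed

lemma part2: "bimodule sc HB (fadd sc D S) (fzero sc D S) (fsc sc D S) hom_act
              HP (hp_add sc D S) (hp_sc sc D S) (hp_mul sc D S) (hp_one sc D S) (ract sc D S)"
  unfolding bimodule_def
proof (intro conjI ballI allI)
  show "hmod sc HB (fadd sc D S) (fzero sc D S) (fsc sc D S) hom_act" by (rule hmod_HB)
  fix f assume f: "f \<in> HB"
  obtain F where F: "f = (\<lambda>k. Q (F k))" using HB_rep[OF f] by blast
  have one: "hp_one sc D S \<in> HP" by (simp add: Q_one)
  show "ract sc D S f (hp_one sc D S) = f"
    by (simp add: ract_eq[OF f one]) (simp add: F Q_one Q_mul)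
  fix y assume y: "y \<in> HP"
  obtain a where a: "y = Q a" using HP_rep[OF y] by blast
  show "ract sc D S f y \<in> HB" using f y by (rule ract_in)
  show "hom_act h (ract sc D S f y) = ract sc D S (hom_act h f) y" for h
    by (simp add: ract_eq[OF f y] ract_eq[OF hom_act_in[OF f] y]) (simp add: hom_act_def)
  show "ract sc D S f (hp_sc sc D S c y) = fsc sc D S c (ract sc D S f y)" for c
    using y by (simp add: ract_eq f) (simp add: F a Q_sc Q_mul fsc_Q tmul_tsc_right)
  show "ract sc D S (fsc sc D S c f) y = fsc sc D S c (ract sc D S f y)" for c
    using fsc_in[OF f, of c] y
    by (simp add: ract_eq f) (simp add: F a Q_sc Q_mul fsc_Q tmul_tsc_left)
  fix y' assume y': "y' \<in> HP"
  obtain b where b: "y' = Q b" using HP_rep[OF y'] by blast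
  show "ract sc D S (ract sc D S f y) y' = ract sc D S f (hp_mul sc D S y y')"
    using ract_in[OF f y] y y'
    by (simp add: ract_eq f) (simp add: F a b Q_mul tmul_assoc)
  show "ract sc D S f (hp_add sc D S y y') = fadd sc D S (ract sc D S f y) (ract sc D S f y')"
    using y y' by (simp add: ract_eq f) (simp add: F a b Q_mul Q_add fadd_Q tmul_add_right)
next
  fix f g y assume f: "f \<in> HB" and g: "g \<in> HB" and y: "y \<in> HP"
  obtain F where F: "f = (\<lambda>k. Q (F k))" using HB_rep[OF f] by blast
  obtain G where G: "g = (\<lambda>k. Q (G k))" using HB_rep[OF g] by blast
  obtain a where a: "y = Q a" using HP_rep[OF y] by blast
  show "ract sc D S (fadd sc D S f g) y = fadd sc D S (ract sc D S f y) (ract sc D S g y)"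
    using fadd_in[OF f g] y f g by (simp add: ract_eq) (simp add: F G a Q_mul fadd_Q tmul_add_left)
qed

end


context setting
begin

abbreviation "TR \<equiv> ten_rels sc D S scM \<pi>"
abbreviation "QW \<equiv> qcl (fspan TR)"
abbreviation "phi1 \<equiv> phi sc D S (hp_one sc D S)"
abbreviation "hpa \<equiv> hp_act scM \<pi>"
abbreviation "NN \<equiv> Nsec sc D S scM \<pi>"
abbreviation "NADD \<equiv> nadd sc D S scM \<pi>"
abbreviation "NZ \<equiv> nzero sc D S scM \<pi>"
abbreviation "NSC \<equiv> nsc sc D S scM \<pi>"
abbreviation "NACT \<equiv> nact sc D S scM \<pi>"
abbreviation "TT \<equiv> Tsec sc D S scM \<pi>"
abbreviation "TH \<equiv> phisec sc D S scM \<pi>"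

lemma tenW: "ten_W sc D S scM \<pi> = fspan TR" by (simp add: ten_W_def)

lemma R1: "f \<in> HB \<Longrightarrow> g \<in> HB \<Longrightarrow> QW (etn (fadd sc D S f g) m) = QW (etn f m + etn g m)"
proof (rule qcl_eq[THEN iffD2])
  assume A: "f \<in> HB" "g \<in> HB"
  have "etn (fadd sc D S f g) m - etn f m - etn g m \<in> TR" unfolding ten_rels_def apply (rule UnI1)+ using A by blast
  from fspan_base[OF this] show "etn (fadd sc D S f g) m - (etn f m + etn g m) \<in> fspan TR" by (simp add: diff_diff_eq)
qed

lemma R2: "f \<in> HB \<Longrightarrow> QW (etn f (m + m')) = QW (etn f m + etn f m')"
proof (rule qcl_eq[THEN iffD2])
  assume A: "f \<in> HB"
  have "etn f (m + m') - etn f m - etn f m' \<in> TR" unfolding ten_rels_def apply (rule UnI1, rule UnI1, rule UnI1, rule UnI2) using A by blast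
  from fspan_base[OF this] show "etn f (m + m') - (etn f m + etn f m') \<in> fspan TR" by (simp add: diff_diff_eq)
qed

lemma R3: "f \<in> HB \<Longrightarrow> QW (etn (fsc sc D S c f) m) = QW (tsc c (etn f m))"
proof (rule qcl_eq[THEN iffD2])
  assume A: "f \<in> HB"
  have "etn (fsc sc D S c f) m - tsc c (etn f m) \<in> TR" unfolding ten_rels_def apply (rule UnI1, rule UnI1, rule UnI2) using A by blast
  from fspan_base[OF this] show "etn (fsc sc D S c f) m - tsc c (etn f m) \<in> fspan TR" .
qed

lemma R4: "f \<in> HB \<Longrightarrow> QW (etn f (scM c m)) = QW (tsc c (etn f m))"
proof (rule qcl_eq[THEN iffD2])
  assume A: "f \<in> HB"
  have "etn f (scM c m) - tsc c (etn f m) \<in> TR" unfolding ten_rels_def apply (rule UnI1, rule UnI2) using A by blast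
  from fspan_base[OF this] show "etn f (scM c m) - tsc c (etn f m) \<in> fspan TR" .
qed

lemma R5: "f \<in> HB \<Longrightarrow> y \<in> HP \<Longrightarrow> QW (etn (ract sc D S f y) m) = QW (etn f (hpa y m))"
proof (rule qcl_eq[THEN iffD2])
  assume A: "f \<in> HB" "y \<in> HP"
  have "etn (ract sc D S f y) m - etn f (hpa y m) \<in> TR" unfolding ten_rels_def apply (rule UnI2) using A by blast
  from fspan_base[OF this] show "etn (ract sc D S f y) m - etn f (hpa y m) \<in> fspan TR" .
qed

lemma QW_add: "NADD (QW p) (QW q) = QW (p + q)"
  by (simp add: nadd_def tenW qcl_add)
lemma QW_sc: "NSC c (QW p) = QW (tsc c p)"
  by (simp add: nsc_def tenW qcl_tsc)
lemma QW_zero: "NZ = QW 0"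
  by (simp add: nzero_def tenW)

lemma QW_cong_add: "QW p = QW p' \<Longrightarrow> QW q = QW q' \<Longrightarrow> QW (p + q) = QW (p' + q')"
  using QW_add[of p q] QW_add[of p' q'] by simp
lemma QW_cong_tsc: "QW p = QW p' \<Longrightarrow> QW (tsc c p) = QW (tsc c p')"
  using QW_sc[of c p] QW_sc[of c p'] by simp
lemma QW_cong_sum_list: "(\<And>i. i \<in> set l \<Longrightarrow> QW (f i) = QW (g i)) \<Longrightarrow>
    QW (sum_list (map f l)) = QW (sum_list (map g l))"
proof (induction l)
  case (Cons a l)
  then have "QW (f a) = QW (g a)" "QW (sum_list (map f l)) = QW (sum_list (map g l))" by auto
  then have "QW (f a + sum_list (map f l)) = QW (g a + sum_list (map g l))" by (rule QW_cong_add)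
  then show ?case by simp
qed simp
lemma QW_cong_sum: "(\<And>i. i \<in> A \<Longrightarrow> QW (f i) = QW (g i)) \<Longrightarrow>
    QW (\<Sum>i\<in>A. f i) = QW (\<Sum>i\<in>A. g i)"
proof (induction A rule: infinite_finite_induct)
  case (insert x F)
  then have "QW (f x) = QW (g x)" "QW (\<Sum>i\<in>F. f i) = QW (\<Sum>i\<in>F. g i)" by auto
  from QW_cong_add[OF this] show ?case using insert by simp
qed simp_all

lemma etn_zero: "f \<in> HB \<Longrightarrow> QW (etn f 0) = QW 0"
proof -
  assume f: "f \<in> HB"
  have "QW (etn f 0) = QW (etn f 0 + etn f 0)" using R2[OF f, of 0 0] by simp
  then have "etn f 0 - (etn f 0 + etn f 0) \<in> fspan TR" by (simp add: qcl_eq)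
  then have "- etn f 0 \<in> fspan TR" by simp
  from fspan_neg[OF this] show ?thesis by (simp add: qcl_eq)
qed

lemma etn_fzero: "QW (etn (fzero sc D S) m) = QW 0"
proof -
  have eq: "fsc sc D S 0 (fzero sc D S) = fzero sc D S" by (simp add: fzero_Q fsc_Q)
  have "QW (etn (fsc sc D S 0 (fzero sc D S)) m) = QW 0" using R3[OF fzero_in, of 0 m] by simp
  then show ?thesis unfolding eq .
qed

lemma hpa_Q: "hpa (Q p) m = tev p m" by (rule hp_act_Q)

lemma hpa_add_m: "hpa y (m + m') = hpa y m + hpa y m'"
  by (simp add: hp_act_def teval_add_m)
lemma hpa_sc_m: "hpa y (scM c m) = scM c (hpa y m)"
  by (simp add: hp_act_def teval_sc_m)
lemma hpa_zero_m: "hpa y 0 = 0"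
  by (simp add: hp_act_def teval_zero_m)
lemma hpa_sum_m: "hpa y (\<Sum>i\<in>A. f i) = (\<Sum>i\<in>A. hpa y (f i))"
  by (simp add: hp_act_def teval_sum_m)
lemma hpa_add: "x \<in> HP \<Longrightarrow> y \<in> HP \<Longrightarrow> hpa (hp_add sc D S x y) m = hpa x m + hpa y m"
  by (auto simp: hp_carrier_eq Q_add hpa_Q teval_add)
lemma hpa_sc: "x \<in> HP \<Longrightarrow> hpa (hp_sc sc D S c x) m = scM c (hpa x m)"
  by (auto simp: hp_carrier_eq Q_sc hpa_Q teval_tsc)
lemma hpa_mul: "x \<in> HP \<Longrightarrow> y \<in> HP \<Longrightarrow> hpa (hp_mul sc D S x y) m = hpa x (hpa y m)"
  by (auto simp: hp_carrier_eq Q_mul hpa_Q teval_tmul)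
lemma hpa_brk: "hpa (brk sc D S h) m = \<pi> h m"
  by (simp add: Q_brk hpa_Q)

lemma phi1_val: "phi1 k = Q (gen k)"
  by (simp add: Q_one phi_Q)
lemma phi1_in: "phi1 \<in> HB"
  by (rule phi_in) (simp add: Q_one)
lemma hpa_phi1: "hpa (phi1 k) m = \<pi> k m"
  by (simp add: phi1_val hpa_Q)
lemma hpa_phi1_1: "hpa (phi1 1) m = m"
  by (simp add: hpa_phi1 pi_one)

lemma hom_act_ract: "f \<in> HB \<Longrightarrow> y \<in> HP \<Longrightarrow> hom_act h (ract sc D S f y) = ract sc D S (hom_act h f) y"
  by (simp add: ract_eq hom_act_in) (simp add: hom_act_def)

end


context setting
begin

lemma TRI1: "f \<in> HB \<Longrightarrow> g \<in> HB \<Longrightarrow> etn (fadd sc D S f g) m - etn f m - etn g m \<in> TR"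
  unfolding ten_rels_def apply (rule UnI1)+ by blast
lemma TRI2: "f \<in> HB \<Longrightarrow> etn f (m + m') - etn f m - etn f m' \<in> TR"
  unfolding ten_rels_def apply (rule UnI1, rule UnI1, rule UnI1, rule UnI2) by blast
lemma TRI3: "f \<in> HB \<Longrightarrow> etn (fsc sc D S c f) m - tsc c (etn f m) \<in> TR"
  unfolding ten_rels_def apply (rule UnI1, rule UnI1, rule UnI2) by blast
lemma TRI4: "f \<in> HB \<Longrightarrow> etn f (scM c m) - tsc c (etn f m) \<in> TR"
  unfolding ten_rels_def apply (rule UnI1, rule UnI2) by blast
lemma TRI5: "f \<in> HB \<Longrightarrow> y \<in> HP \<Longrightarrow> etn (ract sc D S f y) m - etn f (hpa y m) \<in> TR"
  unfolding ten_rels_def apply (rule UnI2) by blast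

lemma TR_cases:
  assumes "r \<in> TR"
    and "\<And>f g m. f \<in> HB \<Longrightarrow> g \<in> HB \<Longrightarrow> P (etn (fadd sc D S f g) m - etn f m - etn g m)"
    and "\<And>f m m'. f \<in> HB \<Longrightarrow> P (etn f (m + m') - etn f m - etn f m')"
    and "\<And>c f m. f \<in> HB \<Longrightarrow> P (etn (fsc sc D S c f) m - tsc c (etn f m))"
    and "\<And>c f m. f \<in> HB \<Longrightarrow> P (etn f (scM c m) - tsc c (etn f m))"
    and "\<And>f y m. f \<in> HB \<Longrightarrow> y \<in> HP \<Longrightarrow> P (etn (ract sc D S f y) m - etn f (hpa y m))"
  shows "P r"
  using assms unfolding ten_rels_def by blast

definition "gh h = (\<lambda>(f :: 'h \<Rightarrow> ('h, 'k) hpar, m :: 'm). (hom_act h f, m))"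
definition "gT = (\<lambda>(f :: 'h \<Rightarrow> ('h, 'k) hpar, m :: 'm). (phi1, hpa (f 1) m))"

lemma pmmap_etn: "pmmap g (etn f m) = Poly_Mapping.single (g (f, m)) 1"
  by (simp add: etn_def)
lemma gh_etn: "pmmap (gh h) (etn f m) = etn (hom_act h f) m"
  by (simp add: pmmap_etn gh_def etn_def)
lemma gT_etn: "pmmap gT (etn f m) = etn phi1 (hpa (f 1) m)"
  by (simp add: pmmap_etn gT_def etn_def)

lemma nact_eq: "NACT h A = QW (pmmap (gh h) (rep A))"
  by (simp add: nact_def tenW gh_def)
lemma Tsec_eq: "TT A = QW (pmmap gT (rep A))"
  by (simp add: Tsec_def tenW gT_def)
lemma TH_eq: "TH m = QW (etn phi1 m)"
  by (simp add: phisec_def tenW)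

lemma NA_rels: "r \<in> TR \<Longrightarrow> pmmap (gh h) r \<in> fspan TR"
proof (erule TR_cases)
  fix f g m assume "f \<in> HB" "g \<in> HB"
  moreover have "hom_act h (fadd sc D S f g) = fadd sc D S (hom_act h f) (hom_act h g)"
    by (simp add: hom_act_def fadd_def)
  ultimately show "pmmap (gh h) (etn (fadd sc D S f g) m - etn f m - etn g m) \<in> fspan TR"
    by (simp add: lin_diff[OF lin_pmmap] gh_etn) (intro fspan_base TRI1 hom_act_in)
next
  fix f m m' assume "f \<in> HB"
  then show "pmmap (gh h) (etn f (m + m') - etn f m - etn f m') \<in> fspan TR"
    by (simp add: lin_diff[OF lin_pmmap] gh_etn) (intro fspan_base TRI2 hom_act_in)
next
  fix c f m assume "f \<in> HB"
  moreover have "hom_act h (fsc sc D S c f) = fsc sc D S c (hom_act h f)"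
    by (simp add: hom_act_def fsc_def)
  ultimately show "pmmap (gh h) (etn (fsc sc D S c f) m - tsc c (etn f m)) \<in> fspan TR"
    by (simp add: lin_diff[OF lin_pmmap] lin_tsc[OF lin_pmmap] gh_etn) (intro fspan_base TRI3 hom_act_in)
next
  fix c f m assume "f \<in> HB"
  then show "pmmap (gh h) (etn f (scM c m) - tsc c (etn f m)) \<in> fspan TR"
    by (simp add: lin_diff[OF lin_pmmap] lin_tsc[OF lin_pmmap] gh_etn) (intro fspan_base TRI4 hom_act_in)
next
  fix f y m assume "f \<in> HB" "y \<in> HP"
  then show "pmmap (gh h) (etn (ract sc D S f y) m - etn f (hpa y m)) \<in> fspan TR"
    by (simp add: lin_diff[OF lin_pmmap] gh_etn hom_act_ract) (intro fspan_base TRI5 hom_act_in)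
qed

lemma LT_rels: "r \<in> TR \<Longrightarrow> pmmap gT r \<in> fspan TR"
proof (erule TR_cases)
  fix f g m assume "f \<in> HB" "g \<in> HB"
  then show "pmmap gT (etn (fadd sc D S f g) m - etn f m - etn g m) \<in> fspan TR"
    by (simp add: lin_diff[OF lin_pmmap] gT_etn fadd_def hpa_add Hbar_val) (intro fspan_base TRI2 phi1_in)
next
  fix f m m' assume "f \<in> HB"
  then show "pmmap gT (etn f (m + m') - etn f m - etn f m') \<in> fspan TR"
    by (simp add: lin_diff[OF lin_pmmap] gT_etn hpa_add_m) (intro fspan_base TRI2 phi1_in)
next
  fix c f m assume "f \<in> HB"
  then show "pmmap gT (etn (fsc sc D S c f) m - tsc c (etn f m)) \<in> fspan TR"
    by (simp add: lin_diff[OF lin_pmmap] lin_tsc[OF lin_pmmap] gT_etn fsc_def hpa_sc Hbar_val)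
      (intro fspan_base TRI4 phi1_in)
next
  fix c f m assume "f \<in> HB"
  then show "pmmap gT (etn f (scM c m) - tsc c (etn f m)) \<in> fspan TR"
    by (simp add: lin_diff[OF lin_pmmap] lin_tsc[OF lin_pmmap] gT_etn hpa_sc_m) (intro fspan_base TRI4 phi1_in)
next
  fix f y m assume "f \<in> HB" "y \<in> HP"
  then show "pmmap gT (etn (ract sc D S f y) m - etn f (hpa y m)) \<in> fspan TR"
    by (simp add: lin_diff[OF lin_pmmap] gT_etn ract_eq hpa_mul Hbar_val fspan_zero)
qed

lemma nact_QW: "NACT h (QW p) = QW (pmmap (gh h) p)"
  unfolding nact_eq by (rule qcl_lin[OF lin_pmmap NA_rels])

lemma T_QW: "TT (QW p) = QW (pmmap gT p)"
  unfolding Tsec_eq by (rule qcl_lin[OF lin_pmmap LT_rels])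

definition "EE p = psum (\<lambda>k v. scM v (hpa (fst k 1) (snd k))) p"

lemma EE_add: "EE (p + q) = EE p + EE q"
  unfolding EE_def by (rule psum_add) (simp_all add: M.scale_left_distrib)
lemma EE_zero[simp]: "EE 0 = 0"
  by (simp add: EE_def)
lemma EE_tsc: "EE (tsc c p) = scM c (EE p)"
  unfolding EE_def by (simp add: psum_tsc) (simp add: psum_def M.scale_sum_right)
lemma EE_minus: "EE (- p) = - EE p"
  using EE_add[of p "-p"] by (simp add: eq_neg_iff_add_eq_0 add.commute)
lemma EE_diff: "EE (p - q) = EE p - EE q"
  using EE_add[of p "-q"] EE_minus[of q] by simp
lemma EE_sum: "EE (\<Sum>i\<in>A. f i) = (\<Sum>i\<in>A. EE (f i))"
  by (induction A rule: infinite_finite_induct) (simp_all add: EE_add)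
lemma EE_sum_list: "EE (sum_list (map f l)) = sum_list (map (\<lambda>i. EE (f i)) l)"
  by (induction l) (simp_all add: EE_add)
lemma EE_single: "EE (Poly_Mapping.single (f, m) v) = scM v (hpa (f 1) m)"
  unfolding EE_def by (simp add: psum_single)
lemma EE_etn: "EE (etn f m) = hpa (f 1) m"
  by (simp add: etn_def EE_single)
lemma EE_expand: "EE p = (\<Sum>k\<in>Poly_Mapping.keys p. scM (Poly_Mapping.lookup p k) (hpa (fst k 1) (snd k)))"
  by (simp add: EE_def psum_def)

lemma EE_rels: "r \<in> TR \<Longrightarrow> EE r = 0"
proof (erule TR_cases)
  fix f g m assume "f \<in> HB" "g \<in> HB"
  then show "EE (etn (fadd sc D S f g) m - etn f m - etn g m) = 0"
    by (simp add: EE_diff EE_etn fadd_def hpa_add Hbar_val)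
next
  fix f m m' assume "f \<in> HB"
  then show "EE (etn f (m + m') - etn f m - etn f m') = 0"
    by (simp add: EE_diff EE_etn hpa_add_m)
next
  fix c f m assume "f \<in> HB"
  then show "EE (etn (fsc sc D S c f) m - tsc c (etn f m)) = 0"
    by (simp add: EE_diff EE_tsc EE_etn fsc_def hpa_sc Hbar_val)
next
  fix c f m assume "f \<in> HB"
  then show "EE (etn f (scM c m) - tsc c (etn f m)) = 0"
    by (simp add: EE_diff EE_tsc EE_etn hpa_sc_m)
next
  fix f y m assume "f \<in> HB" "y \<in> HP"
  then show "EE (etn (ract sc D S f y) m - etn f (hpa y m)) = 0"
    by (simp add: EE_diff EE_etn ract_eq hpa_mul Hbar_val)
qed

lemma EE_W: "p \<in> fspan TR \<Longrightarrow> EE p = 0"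
proof -
  assume "p \<in> fspan TR"
  then have "p \<in> tsm.span TR" by (simp add: fspan_span)
  then show "EE p = 0"
  proof (induction rule: tsm.span_induct_alt)
    case (step c x y)
    then show ?case by (simp add: EE_add EE_tsc EE_rels)
  qed simp
qed

lemma EE_QW: "QW p = QW q \<Longrightarrow> EE p = EE q"
  using EE_W[of "p - q"] by (simp add: qcl_eq EE_diff)

lemma etn_lincomb: "f \<in> HB \<Longrightarrow>
   QW (etn f (\<Sum>k\<in>A. scM (c k) (e k))) = QW (\<Sum>k\<in>A. tsc (c k) (etn f (e k)))"
proof (induction A rule: infinite_finite_induct)
  case (infinite A) then show ?case by (simp add: etn_zero)
next
  case empty then show ?case by (simp add: etn_zero)
next
  case (insert x F)
  have "QW (etn f (scM (c x) (e x) + (\<Sum>k\<in>F. scM (c k) (e k))))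
      = QW (etn f (scM (c x) (e x)) + etn f (\<Sum>k\<in>F. scM (c k) (e k)))" by (rule R2[OF insert.prems])
  also have "\<dots> = QW (tsc (c x) (etn f (e x)) + (\<Sum>k\<in>F. tsc (c k) (etn f (e k))))"
    by (rule QW_cong_add[OF R4[OF insert.prems] insert.IH[OF insert.prems]])
  finally show ?case using insert by simp
qed

lemma LT_E: "QW (pmmap gT p) = TH (EE p)"
proof -
  have "pmmap gT p = (\<Sum>k\<in>Poly_Mapping.keys p. tsc (Poly_Mapping.lookup p k) (etn phi1 (hpa (fst k 1) (snd k))))"
    by (subst lin_expand[OF lin_pmmap]) (simp add: gT_def etn_def case_prod_beta)
  then show ?thesis
    by (simp add: TH_eq EE_expand etn_lincomb[OF phi1_in])
qed

lemma T_QW_TH: "TT (QW p) = TH (EE p)"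
  by (simp add: T_QW LT_E)

lemma TH_add: "TH (m + m') = NADD (TH m) (TH m')"
  by (simp add: TH_eq QW_add R2[OF phi1_in])
lemma TH_sc: "TH (scM c m) = NSC c (TH m)"
  by (simp add: TH_eq QW_sc R4[OF phi1_in])
lemma TH_zero: "TH 0 = NZ"
  by (simp add: TH_eq QW_zero etn_zero[OF phi1_in])

lemma nact_TH: "NACT h (TH m) = QW (etn (hom_act h phi1) m)"
  by (simp add: TH_eq nact_QW gh_etn)

lemma T_nact_TH: "TT (NACT h (TH m)) = TH (\<pi> h m)"
  by (simp add: nact_TH T_QW_TH EE_etn hom_act_def hpa_phi1)

lemma EE_TH: "EE (rep (TH m)) = m"
proof -
  have "QW (rep (QW (etn phi1 m))) = QW (etn phi1 m)" by (rule qcl_rep)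
  then have "EE (rep (QW (etn phi1 m))) = EE (etn phi1 m)" by (rule EE_QW)
  also have "\<dots> = m" by (simp add: EE_etn hpa_phi1_1)
  finally show ?thesis by (simp only: TH_eq)
qed

lemma TH_inj: "inj TH"
proof (rule injI)
  fix m m' assume eq: "TH m = TH m'"
  have "m = EE (rep (TH m))" by (rule EE_TH[symmetric])
  also have "\<dots> = EE (rep (TH m'))" by (simp only: eq)
  also have "\<dots> = m'" by (rule EE_TH)
  finally show "m = m'" .
qed

end


lemma lin_plus: "lin L \<Longrightarrow> lin L' \<Longrightarrow> lin (\<lambda>p. L p + L' p)"
  by (simp add: lin_def tsm.scale_right_distrib)
lemma lin_tscL: "lin L \<Longrightarrow> lin (\<lambda>p. tsc c (L p))"
  by (simp add: lin_def tsm.scale_right_distrib mult.commute)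

context setting
begin

abbreviation "PS \<equiv> {p. Poly_Mapping.keys p \<subseteq> HB \<times> UNIV}"

lemma NN_iff: "x \<in> NN \<longleftrightarrow> (\<exists>p \<in> PS. x = QW p)"
  by (auto simp: Nsec_def tenW)

lemma PS_add: "p \<in> PS \<Longrightarrow> q \<in> PS \<Longrightarrow> p + q \<in> PS"
  using keys_add[of p q] by auto
lemma PS_tsc: "p \<in> PS \<Longrightarrow> tsc c p \<in> PS"
  using keys_tsc[of c p] by auto
lemma PS_zero: "0 \<in> PS" by simp
lemma PS_gh: "p \<in> PS \<Longrightarrow> pmmap (gh h) p \<in> PS"
proof -
  assume p: "p \<in> PS"
  have "gh h x \<in> HB \<times> UNIV" if xk: "x \<in> Poly_Mapping.keys p" for x
  proof -
    obtain f m where "x = (f, m)" "f \<in> HB" using p xk by force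
    then show ?thesis by (simp add: gh_def hom_act_in)
  qed
  then show ?thesis using keys_pmmap[of "gh h" p] by blast
qed
lemma PS_gT: "pmmap gT p \<in> PS"
proof -
  have "gT x \<in> HB \<times> UNIV" for x
    by (cases x) (simp add: gT_def phi1_in)
  then show ?thesis using keys_pmmap[of gT p] by blast
qed
lemma PS_etn: "f \<in> HB \<Longrightarrow> etn f m \<in> PS"
  by (simp add: etn_def)

lemma QW_in: "p \<in> PS \<Longrightarrow> QW p \<in> NN"
  by (auto simp: NN_iff)

lemma TH_in: "TH m \<in> NN"
  unfolding TH_eq by (intro QW_in PS_etn phi1_in)

lemma cvs_NN: "cvs NN NADD NZ NSC"
  unfolding cvs_def
proof (intro conjI ballI allI)
  show "NZ \<in> NN" unfolding QW_zero by (intro QW_in PS_zero)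
  fix x y w assume x: "x \<in> NN" and y: "y \<in> NN" and w: "w \<in> NN"
  obtain p where p: "p \<in> PS" "x = QW p" using x by (auto simp: NN_iff)
  obtain q where q: "q \<in> PS" "y = QW q" using y by (auto simp: NN_iff)
  obtain r where r: "r \<in> PS" "w = QW r" using w by (auto simp: NN_iff)
  show "NADD x y \<in> NN" unfolding p q QW_add by (intro QW_in PS_add p q)
  show "NADD (NADD x y) w = NADD x (NADD y w)" by (simp add: p q r QW_add add.assoc)
  show "NADD x y = NADD y x" by (simp add: p q QW_add add.commute)
  fix c show "NSC c (NADD x y) = NADD (NSC c x) (NSC c y)"
    by (simp add: p q QW_add QW_sc tsm.scale_right_distrib)
next
  fix c x assume x: "x \<in> NN"
  obtain p where p: "p \<in> PS" "x = QW p" using x by (auto simp: NN_iff)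
  show "NSC c x \<in> NN" unfolding p QW_sc by (intro QW_in PS_tsc p)
next
  fix x assume x: "x \<in> NN"
  obtain p where p: "p \<in> PS" "x = QW p" using x by (auto simp: NN_iff)
  show "NADD NZ x = x" by (simp add: p QW_zero QW_add)
  show "NSC 1 x = x" by (simp add: p QW_sc)
  show "\<exists>y\<in>NN. NADD x y = NZ"
  proof (rule bexI[of _ "QW (- p)"])
    show "QW (- p) \<in> NN" using p(1) keys_minus[of p] by (intro QW_in) simp
  qed (simp add: p QW_add QW_zero)
next
  fix c d x assume x: "x \<in> NN"
  obtain p where p: "p \<in> PS" "x = QW p" using x by (auto simp: NN_iff)
  show "NSC (c + d) x = NADD (NSC c x) (NSC d x)" by (simp add: p QW_sc QW_add tsm.scale_left_distrib)
  show "NSC (c * d) x = NSC c (NSC d x)" by (simp add: p QW_sc)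
qed

lemma single_etn: "Poly_Mapping.single (f, m) 1 = etn f m" by (simp add: etn_def)

lemma gh_comp: "gh h \<circ> gh k = gh (h * k)"
  by (auto simp: gh_def hom_act_def mult.assoc fun_eq_iff)

lemma gh_one: "gh 1 = (\<lambda>x. x)"
  by (auto simp: gh_def hom_act_def fun_eq_iff)

lemma hmod_NN: "hmod sc NN NADD NZ NSC NACT"
  unfolding hmod_def
proof (intro conjI allI ballI)
  show "cvs NN NADD NZ NSC" by (rule cvs_NN)
  show "clin NN NADD NSC NN NADD NSC (NACT h)" for h
    unfolding clin_def
  proof (intro conjI ballI allI)
    fix x assume x: "x \<in> NN"
    obtain p where p: "p \<in> PS" "x = QW p" using x by (auto simp: NN_iff)
    show "NACT h x \<in> NN" unfolding p nact_QW by (intro QW_in PS_gh p)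
    fix c show "NACT h (NSC c x) = NSC c (NACT h x)"
      by (simp add: p nact_QW QW_sc lin_tsc[OF lin_pmmap])
    fix y assume y: "y \<in> NN"
    obtain q where q: "q \<in> PS" "y = QW q" using y by (auto simp: NN_iff)
    show "NACT h (NADD x y) = NADD (NACT h x) (NACT h y)"
      by (simp add: p q nact_QW QW_add lin_add[OF lin_pmmap])
  qed
next
  fix h k v assume v: "v \<in> NN"
  obtain p where p: "p \<in> PS" "v = QW p" using v by (auto simp: NN_iff)
  have "pmmap (gh (h + k)) p - (pmmap (gh h) p + pmmap (gh k) p) \<in> fspan TR"
  proof (rule lin_expand_span[OF lin_pmmap lin_plus[OF lin_pmmap lin_pmmap]])
    fix kk assume "kk \<in> Poly_Mapping.keys p"
    then obtain f m where kk: "kk = (f, m)" and f: "f \<in> HB" using p by force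
    have "hom_act (h + k) f = fadd sc D S (hom_act h f) (hom_act k f)"
      by (rule ext) (simp add: hom_act_def fadd_def distrib_left Hbar_add[OF f])
    then show "pmmap (gh (h + k)) (Poly_Mapping.single kk 1) -
       (pmmap (gh h) (Poly_Mapping.single kk 1) + pmmap (gh k) (Poly_Mapping.single kk 1)) \<in> fspan TR"
      using TRI1[OF hom_act_in[OF f] hom_act_in[OF f], of h k m]
      by (simp add: kk single_etn gh_etn diff_diff_eq fspan_base)
  qed
  then show "NACT (h + k) v = NADD (NACT h v) (NACT k v)"
    by (simp add: p nact_QW QW_add qcl_eq)
  show "NACT (h * k) v = NACT h (NACT k v)"
    by (simp add: p nact_QW pmmap_comp gh_comp)
next
  fix c h v assume v: "v \<in> NN"
  obtain p where p: "p \<in> PS" "v = QW p" using v by (auto simp: NN_iff)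
  have "pmmap (gh (sc c h)) p - tsc c (pmmap (gh h) p) \<in> fspan TR"
  proof (rule lin_expand_span[OF lin_pmmap lin_tscL[OF lin_pmmap]])
    fix kk assume "kk \<in> Poly_Mapping.keys p"
    then obtain f m where kk: "kk = (f, m)" and f: "f \<in> HB" using p by force
    have "hom_act (sc c h) f = fsc sc D S c (hom_act h f)"
      by (rule ext) (simp add: hom_act_def fsc_def sc_mult2[symmetric] Hbar_sc[OF f])
    then show "pmmap (gh (sc c h)) (Poly_Mapping.single kk 1) - tsc c (pmmap (gh h) (Poly_Mapping.single kk 1)) \<in> fspan TR"
      using TRI3[OF hom_act_in[OF f], of c h m]
      by (simp add: kk single_etn gh_etn fspan_base)
  qed
  then show "NACT (sc c h) v = NSC c (NACT h v)"
    by (simp add: p nact_QW QW_sc qcl_eq)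
next
  fix v assume v: "v \<in> NN"
  obtain p where p: "p \<in> PS" "v = QW p" using v by (auto simp: NN_iff)
  show "NACT 1 v = v" by (simp add: p nact_QW gh_one pmmap_id)
qed

end


context setting
begin

lemma T_in: "x \<in> NN \<Longrightarrow> TT x \<in> NN"
proof -
  assume "x \<in> NN"
  then obtain p where x: "x = QW p" by (auto simp: NN_iff)
  show ?thesis unfolding x T_QW by (intro QW_in PS_gT)
qed

lemma T_TH: "TT (TH m) = TH m"
  by (simp add: TH_eq T_QW_TH EE_etn hpa_phi1_1)

lemma T_form: "x \<in> NN \<Longrightarrow> \<exists>e. TT x = TH e"
  by (auto simp: NN_iff T_QW_TH)

lemma T_idem: "x \<in> NN \<Longrightarrow> TT (TT x) = TT x"
  using T_form T_TH by metis

lemma T_image: "TT ` NN = range TH"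
proof
  show "TT ` NN \<subseteq> range TH" using T_form by blast
  show "range TH \<subseteq> TT ` NN"
  proof
    fix x assume "x \<in> range TH"
    then obtain m where "x = TH m" by blast
    then show "x \<in> TT ` NN" using T_TH TH_in by (metis image_eqI)
  qed
qed

lemma T_clin: "clin NN NADD NSC NN NADD NSC TT"
  unfolding clin_def
proof (intro conjI ballI allI)
  fix x assume x: "x \<in> NN"
  show "TT x \<in> NN" using x by (rule T_in)
  obtain p where p: "p \<in> PS" "x = QW p" using x by (auto simp: NN_iff)
  fix c show "TT (NSC c x) = NSC c (TT x)"
    by (simp add: p T_QW QW_sc lin_tsc[OF lin_pmmap])
  fix y assume y: "y \<in> NN"
  obtain q where q: "q \<in> PS" "y = QW q" using y by (auto simp: NN_iff)
  show "TT (NADD x y) = NADD (TT x) (TT y)"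
    by (simp add: p q T_QW QW_add lin_add[OF lin_pmmap])
qed

lemma bij_TH: "bij_betw TH UNIV (TT ` NN)"
  unfolding T_image using TH_inj by (simp add: bij_betw_def)

lemma TH_pi: "TH (\<pi> h m) = TT (NACT h (TH m))"
  by (simp add: T_nact_TH)

lemma csum_TH2: "csum NADD NZ (map (\<lambda>(a,b). TH (F a b)) l) = TH (\<Sum>(a,b)\<leftarrow>l. F a b)"
proof (induction l)
  case Nil then show ?case by (simp add: csum_def TH_zero)
next
  case (Cons x l)
  obtain a b where x: "x = (a, b)" by force
  from Cons show ?case by (simp add: x csum_def TH_add)
qed

lemma pmod_TN: "pmod sc D S (TT ` NN) NADD NZ NSC (\<lambda>h x. TT (NACT h x))"
  unfolding T_image pmod_def
proof (intro conjI allI ballI)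
  show "cvs (range TH) NADD NZ NSC"
    unfolding cvs_def
  proof (intro conjI allI ballI)
    show "NZ \<in> range TH" by (metis TH_zero rangeI)
    fix x y w assume "x \<in> range TH" "y \<in> range TH" "w \<in> range TH"
    then obtain a b d where x: "x = TH a" and y: "y = TH b" and w: "w = TH d" by blast
    show "NADD x y \<in> range TH" by (simp add: x y TH_add[symmetric])
    show "NADD (NADD x y) w = NADD x (NADD y w)" by (simp add: x y w TH_add[symmetric] add.assoc)
    show "NADD x y = NADD y x" by (simp add: x y TH_add[symmetric] add.commute)
    fix c show "NSC c (NADD x y) = NADD (NSC c x) (NSC c y)"
      by (simp add: x y TH_add[symmetric] TH_sc[symmetric] M.scale_right_distrib)
  next
    fix c x assume "x \<in> range TH"
    then obtain a where x: "x = TH a" by blast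
    show "NSC c x \<in> range TH" by (simp add: x TH_sc[symmetric])
  next
    fix x assume "x \<in> range TH"
    then obtain a where x: "x = TH a" by blast
    show "NADD NZ x = x" by (simp add: x TH_zero[symmetric] TH_add[symmetric])
    show "NSC 1 x = x" by (simp add: x TH_sc[symmetric])
    show "\<exists>y\<in>range TH. NADD x y = NZ"
      by (rule bexI[of _ "TH (- a)"]) (simp_all add: x TH_zero[symmetric] TH_add[symmetric])
  next
    fix c d x assume "x \<in> range TH"
    then obtain a where x: "x = TH a" by blast
    show "NSC (c + d) x = NADD (NSC c x) (NSC d x)"
      by (simp add: x TH_sc[symmetric] TH_add[symmetric] M.scale_left_distrib)
    show "NSC (c * d) x = NSC c (NSC d x)" by (simp add: x TH_sc[symmetric])
  qed
  show "clin (range TH) NADD NSC (range TH) NADD NSC (\<lambda>x. TT (NACT h x))" for h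
    unfolding clin_def
    by (auto simp: T_nact_TH TH_add[symmetric] TH_sc[symmetric] pi_add_m pi_sc_m)
  fix h k v assume "v \<in> range TH"
  then obtain m where v: "v = TH m" by blast
  show "TT (NACT (h + k) v) = NADD (TT (NACT h v)) (TT (NACT k v))"
    by (simp add: v T_nact_TH TH_add[symmetric] pi_add_h)
  show "csum NADD NZ (map (\<lambda>(a, b). TT (NACT h (TT (NACT a (TT (NACT (S b) v)))))) (D k)) =
        csum NADD NZ (map (\<lambda>(a, b). TT (NACT (h * a) (TT (NACT (S b) v)))) (D k))"
    by (simp add: v T_nact_TH csum_TH2 pi_ax2)
  show "csum NADD NZ (map (\<lambda>(a, b). TT (NACT a (TT (NACT (S b) (TT (NACT k v)))))) (D h)) =
        csum NADD NZ (map (\<lambda>(a, b). TT (NACT a (TT (NACT (S b * k) v)))) (D h))"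
    by (simp add: v T_nact_TH csum_TH2 pi_ax3)
  show "csum NADD NZ (map (\<lambda>(a, b). TT (NACT h (TT (NACT (S a) (TT (NACT b v)))))) (D k)) =
        csum NADD NZ (map (\<lambda>(a, b). TT (NACT (h * S a) (TT (NACT b v)))) (D k))"
    by (simp add: v T_nact_TH csum_TH2 pi_ax4)
  show "csum NADD NZ (map (\<lambda>(a, b). TT (NACT (S a) (TT (NACT b (TT (NACT k v)))))) (D h)) =
        csum NADD NZ (map (\<lambda>(a, b). TT (NACT (S a) (TT (NACT (b * k) v)))) (D h))"
    by (simp add: v T_nact_TH csum_TH2 pi_ax5)
next
  fix c h v assume "v \<in> range TH"
  then obtain m where v: "v = TH m" by blast
  show "TT (NACT (sc c h) v) = NSC c (TT (NACT h v))"
    by (simp add: v T_nact_TH TH_sc[symmetric] pi_sc_h)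
next
  fix v assume "v \<in> range TH"
  then obtain m where v: "v = TH m" by blast
  show "TT (NACT 1 v) = v" by (simp add: v T_nact_TH pi_one)
qed

end


context setting
begin

definition "eh h = (\<Sum>i\<leftarrow>D h. tmul (gen (fst i)) (gen (S (snd i))))"

lemma rel2': "Q (\<Sum>i\<leftarrow>D k. tmul (gen (h * fst i)) (gen (S (snd i))))
           = Q (tmul (gen h) (eh k))"
proof -
  have "Q (\<Sum>i\<leftarrow>D k. tmul (gen (h * fst i)) (gen (S (snd i))))
      = Q (\<Sum>i\<leftarrow>D k. tmul (tmul (gen h) (gen (fst i))) (gen (S (snd i))))"
    using rel2[where k = k and h = h] by (simp add: case_prod_beta')
  also have "\<dots> = Q (tmul (gen h) (eh k))"
    by (simp add: eh_def tmul_sum_list_right tmul_assoc)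
  finally show ?thesis .
qed

lemma rel3': "Q (\<Sum>i\<leftarrow>D h. tmul (gen (fst i)) (gen (S (snd i) * k)))
           = Q (tmul (eh h) (gen k))"
proof -
  have "Q (\<Sum>i\<leftarrow>D h. tmul (gen (fst i)) (gen (S (snd i) * k)))
      = Q (\<Sum>i\<leftarrow>D h. tmul (tmul (gen (fst i)) (gen (S (snd i)))) (gen k))"
    using rel3[where k = k and h = h] by (simp add: case_prod_beta')
  also have "\<dots> = Q (tmul (eh h) (gen k))"
    by (simp add: eh_def tmul_sum_list_left)
  finally show ?thesis .
qed

lemma sum_list_addf': "(\<Sum>i\<leftarrow>l. f i + g i) = (\<Sum>i\<leftarrow>l. f i) + (\<Sum>i\<leftarrow>l. (g i :: 'z::ab_group_add))"
  by (induction l) (simp_all add: algebra_simps)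

lemma claimD: "bvalid sc D S l0 \<Longrightarrow>
   Q (\<Sum>i\<leftarrow>D h. tmul (gen (fst i)) (bs l0 (S (snd i)))) = Q (tmul (eh h) (bs l0 1))"
proof (induction l0)
  case Nil then show ?case by simp
next
  case (Cons y l0)
  obtain h' x where y: "y = (h', x)" by force
  with Cons have vl: "bvalid sc D S l0" by auto
  have "(\<Sum>i\<leftarrow>D h. tmul (gen (fst i)) (bs (y # l0) (S (snd i))))
      = (\<Sum>i\<leftarrow>D h. tmul (gen (fst i)) (tmul (gen (S (snd i) * h')) (rep x)))
        + (\<Sum>i\<leftarrow>D h. tmul (gen (fst i)) (bs l0 (S (snd i))))"
    by (simp add: y tmul_add_right sum_list_addf')
  also have "(\<Sum>i\<leftarrow>D h. tmul (gen (fst i)) (tmul (gen (S (snd i) * h')) (rep x)))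
      = tmul (\<Sum>i\<leftarrow>D h. tmul (gen (fst i)) (gen (S (snd i) * h'))) (rep x)"
    by (simp add: tmul_sum_list_left tmul_assoc)
  finally have e: "(\<Sum>i\<leftarrow>D h. tmul (gen (fst i)) (bs (y # l0) (S (snd i))))
      = tmul (\<Sum>i\<leftarrow>D h. tmul (gen (fst i)) (gen (S (snd i) * h'))) (rep x)
        + (\<Sum>i\<leftarrow>D h. tmul (gen (fst i)) (bs l0 (S (snd i))))" .
  have "Q (tmul (\<Sum>i\<leftarrow>D h. tmul (gen (fst i)) (gen (S (snd i) * h'))) (rep x))
      = Q (tmul (tmul (eh h) (gen h')) (rep x))"
    by (rule Q_cong_mul[OF rel3' refl])
  from Q_cong_add[OF this Cons.IH[OF vl]]
  have "Q (\<Sum>i\<leftarrow>D h. tmul (gen (fst i)) (bs (y # l0) (S (snd i))))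
      = Q (tmul (tmul (eh h) (gen h')) (rep x) + tmul (eh h) (bs l0 1))" by (simp only: e)
  also have "\<dots> = Q (tmul (eh h) (bs (y # l0) 1))" by (simp add: y tmul_add_right tmul_assoc)
  finally show ?case .
qed

lemma claimC: "f \<in> HB \<Longrightarrow>
   (\<Sum>i\<leftarrow>D h. \<pi> (fst i) (hpa (f (S (snd i))) m)) = tev (eh h) (hpa (f 1) m)"
proof -
  assume "f \<in> HB"
  then obtain l0 where v: "bvalid sc D S l0" and fl: "f = bsum sc D S l0" by (auto simp: Hbar_iff)
  have "(\<Sum>i\<leftarrow>D h. \<pi> (fst i) (hpa (f (S (snd i))) m))
      = tev (\<Sum>i\<leftarrow>D h. tmul (gen (fst i)) (bs l0 (S (snd i)))) m"
    by (simp add: fl bsum_eq[OF v] hpa_Q teval_sum_list teval_tmul)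
  also have "\<dots> = hpa (Q (\<Sum>i\<leftarrow>D h. tmul (gen (fst i)) (bs l0 (S (snd i))))) m"
    by (simp add: hpa_Q)
  also have "\<dots> = hpa (Q (tmul (eh h) (bs l0 1))) m" by (simp only: claimD[OF v])
  also have "\<dots> = tev (eh h) (hpa (f 1) m)"
    by (simp add: hpa_Q teval_tmul fl bsum_eq[OF v])
  finally show ?thesis .
qed

lemma EE_gh: "EE (pmmap (gh g) p) = (\<Sum>k\<in>Poly_Mapping.keys p. scM (Poly_Mapping.lookup p k) (hpa (fst k g) (snd k)))"
proof -
  have "pmmap (gh g) p = (\<Sum>k\<in>Poly_Mapping.keys p. tsc (Poly_Mapping.lookup p k) (Poly_Mapping.single (gh g k) 1))"
    by (subst lin_expand[OF lin_pmmap]) simp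
  then show ?thesis
    by (simp add: EE_sum EE_tsc gh_def case_prod_beta EE_single hom_act_def)
qed

lemma sum_list_sum_swap: "(\<Sum>i\<leftarrow>l. \<Sum>k\<in>A. G i k) = (\<Sum>k\<in>A. \<Sum>i\<leftarrow>l. (G i k :: 'z::ab_group_add))"
  by (induction l) (simp_all add: sum.distrib)

lemma scM_sum_list: "scM c (\<Sum>i\<leftarrow>l. f i) = (\<Sum>i\<leftarrow>l. scM c (f i))"
  by (induction l) (simp_all add: M.scale_right_distrib)

lemma pi_sum_list: "\<pi> a (\<Sum>i\<leftarrow>l. f i) = (\<Sum>i\<leftarrow>l. \<pi> a (f i))"
  by (induction l) (simp_all add: pi_add_m pi_zero_m)

lemma claimB: "p \<in> PS \<Longrightarrow>
  (\<Sum>i\<leftarrow>D h. \<pi> (fst i) (EE (pmmap (gh (S (snd i))) p))) = tev (eh h) (EE p)"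
proof -
  assume p: "p \<in> PS"
  have "(\<Sum>i\<leftarrow>D h. \<pi> (fst i) (EE (pmmap (gh (S (snd i))) p)))
     = (\<Sum>k\<in>Poly_Mapping.keys p. scM (Poly_Mapping.lookup p k)
          (\<Sum>i\<leftarrow>D h. \<pi> (fst i) (hpa (fst k (S (snd i))) (snd k))))"
    by (simp add: EE_gh pi_sum_m pi_sc_m sum_list_sum_swap scM_sum_list)
  also have "\<dots> = (\<Sum>k\<in>Poly_Mapping.keys p. scM (Poly_Mapping.lookup p k)
          (tev (eh h) (hpa (fst k 1) (snd k))))"
  proof (rule sum.cong[OF refl])
    fix k assume "k \<in> Poly_Mapping.keys p"
    then have "fst k \<in> HB" using p by auto
    then show "scM (Poly_Mapping.lookup p k) (\<Sum>i\<leftarrow>D h. \<pi> (fst i) (hpa (fst k (S (snd i))) (snd k)))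
        = scM (Poly_Mapping.lookup p k) (tev (eh h) (hpa (fst k 1) (snd k)))"
      by (simp add: claimC)
  qed
  also have "\<dots> = tev (eh h) (EE p)"
    by (simp add: EE_expand teval_sum_m teval_sc_m)
  finally show ?thesis .
qed

lemma csum_QW: "csum NADD NZ (map (\<lambda>i. QW (F i)) l) = QW (\<Sum>i\<leftarrow>l. F i)"
  by (induction l) (simp_all add: csum_def QW_zero QW_add)

lemma Tc_eq: "Tc D S NADD NZ NACT TT h x = csum NADD NZ (map (\<lambda>i. NACT (fst i) (TT (NACT (S (snd i)) x))) (D h))"
  by (simp add: Tc_def case_prod_beta')

lemma etn_sumfun:
  "(\<And>i. i \<in> set l \<Longrightarrow> (\<lambda>k. Q (F i k)) \<in> HB) \<Longrightarrow>
   QW (\<Sum>i\<leftarrow>l. etn (\<lambda>k. Q (F i k)) e) = QW (etn (\<lambda>k. Q (\<Sum>i\<leftarrow>l. F i k)) e)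
   \<and> (\<lambda>k. Q (\<Sum>i\<leftarrow>l. F i k)) \<in> HB"
proof (induction l)
  case Nil
  show ?case using etn_fzero[of e] fzero_in by (simp add: fzero_Q)
next
  case (Cons a l)
  then have ha: "(\<lambda>k. Q (F a k)) \<in> HB" and IH: "QW (\<Sum>i\<leftarrow>l. etn (\<lambda>k. Q (F i k)) e) = QW (etn (\<lambda>k. Q (\<Sum>i\<leftarrow>l. F i k)) e)"
    and hl: "(\<lambda>k. Q (\<Sum>i\<leftarrow>l. F i k)) \<in> HB" by auto
  have fa: "fadd sc D S (\<lambda>k. Q (F a k)) (\<lambda>k. Q (\<Sum>i\<leftarrow>l. F i k)) = (\<lambda>k. Q (\<Sum>i\<leftarrow>a # l. F i k))"
    by (simp add: fadd_Q)
  have "QW (\<Sum>i\<leftarrow>a # l. etn (\<lambda>k. Q (F i k)) e)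
      = QW (etn (\<lambda>k. Q (F a k)) e + etn (\<lambda>k. Q (\<Sum>i\<leftarrow>l. F i k)) e)"
    by simp (rule QW_cong_add[OF refl IH])
  also have "\<dots> = QW (etn (\<lambda>k. Q (\<Sum>i\<leftarrow>a # l. F i k)) e)"
    using R1[OF ha hl, of e] by (simp add: fa)
  finally show ?case using fadd_in[OF ha hl] fa by simp
qed

lemma claimA: "QW (\<Sum>i\<leftarrow>D h. etn (hom_act (fst i) phi1) (\<pi> (S (snd i)) e)) = TH (tev (eh h) e)"
proof -
  let ?F = "\<lambda>i k. tmul (gen (k * fst i)) (gen (S (snd i)))"
  have ract1: "ract sc D S (hom_act a phi1) (brk sc D S g) = (\<lambda>k. Q (tmul (gen (k * a)) (gen g)))" for a g
  proof -
    have "brk sc D S g \<in> HP" by (simp add: Q_brk)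
    then have "ract sc D S (hom_act a phi1) (brk sc D S g) = (\<lambda>k. hp_mul sc D S (hom_act a phi1 k) (brk sc D S g))"
      by (rule ract_eq[OF hom_act_in[OF phi1_in]])
    then show ?thesis by (simp add: hom_act_def phi1_val Q_brk Q_mul)
  qed
  have inHB: "(\<lambda>k. Q (?F i k)) \<in> HB" for i
    using ract_in[OF hom_act_in[OF phi1_in] Q_in, of "fst i" "gen (S (snd i))"] ract1 Q_brk by simp
  have "QW (\<Sum>i\<leftarrow>D h. etn (hom_act (fst i) phi1) (\<pi> (S (snd i)) e))
      = QW (\<Sum>i\<leftarrow>D h. etn (\<lambda>k. Q (?F i k)) e)"
  proof (rule QW_cong_sum_list)
    fix i
    have "QW (etn (hom_act (fst i) phi1) (\<pi> (S (snd i)) e))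
        = QW (etn (ract sc D S (hom_act (fst i) phi1) (brk sc D S (S (snd i)))) e)"
      using R5[OF hom_act_in[OF phi1_in], of "brk sc D S (S (snd i))" "fst i" e]
      by (simp add: hpa_brk Q_brk hpa_Q)
    then show "QW (etn (hom_act (fst i) phi1) (\<pi> (S (snd i)) e)) = QW (etn (\<lambda>k. Q (?F i k)) e)"
      by (simp add: ract1)
  qed
  also have "\<dots> = QW (etn (\<lambda>k. Q (\<Sum>i\<leftarrow>D h. ?F i k)) e)"
    using etn_sumfun[of "D h" ?F e] inHB by blast
  also have "(\<lambda>k. Q (\<Sum>i\<leftarrow>D h. ?F i k)) = ract sc D S phi1 (Q (eh h))"
    by (rule ext) (simp add: rel2' ract_eq phi1_in phi1_val Q_mul)
  also have "QW (etn (ract sc D S phi1 (Q (eh h))) e) = QW (etn phi1 (hpa (Q (eh h)) e))"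
    by (rule R5[OF phi1_in Q_in])
  also have "\<dots> = TH (tev (eh h) e)" by (simp add: TH_eq hpa_Q)
  finally show ?thesis .
qed

lemma c_condition: "x \<in> NN \<Longrightarrow> Tc D S NADD NZ NACT TT h (TT x) = TT (Tc D S NADD NZ NACT TT h x)"
proof -
  assume "x \<in> NN"
  then obtain p where p: "p \<in> PS" and x: "x = QW p" by (auto simp: NN_iff)
  have Tx: "TT x = TH (EE p)" by (simp add: x T_QW_TH)
  have "Tc D S NADD NZ NACT TT h (TT x)
      = QW (\<Sum>i\<leftarrow>D h. etn (hom_act (fst i) phi1) (\<pi> (S (snd i)) (EE p)))"
    by (simp only: Tc_eq Tx T_nact_TH) (simp add: nact_TH csum_QW)
  also have "\<dots> = TH (tev (eh h) (EE p))" by (rule claimA)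
  also have "\<dots> = TH (\<Sum>i\<leftarrow>D h. \<pi> (fst i) (EE (pmmap (gh (S (snd i))) p)))"
    by (simp add: claimB[OF p])
  also have "\<dots> = TT (Tc D S NADD NZ NACT TT h x)"
    by (simp add: Tc_eq x nact_QW T_QW_TH nact_TH csum_QW EE_sum_list EE_etn hom_act_def hpa_phi1)
  finally show ?thesis .
qed

end


context setting
begin

lemma hom_phi_ract: "x \<in> HP \<Longrightarrow> hom_act h (phi sc D S x) = ract sc D S (hom_act h phi1) x"
proof -
  assume x: "x \<in> HP"
  have "ract sc D S (hom_act h phi1) x = (\<lambda>k. hp_mul sc D S (hom_act h phi1 k) x)"
    by (rule ract_eq[OF hom_act_in[OF phi1_in] x])
  then show ?thesis using x by (simp add: hom_act_def phi_def Q_brk Q_one Q_mul Q_mul_rep)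
qed

abbreviation "SL le \<equiv> (\<Sum>(h,e)\<leftarrow>le. etn (hom_act h phi1) e)"

lemma single_case: "bvalid sc D S l0 \<Longrightarrow> \<exists>le. QW (tsc c (etn (bsum sc D S l0) m)) = QW (SL le)"
proof (induction l0)
  case Nil
  have "QW (tsc c (etn (fzero sc D S) m)) = QW (tsc c 0)" by (rule QW_cong_tsc[OF etn_fzero])
  then show ?case by (intro exI[of _ "[]"]) (simp add: bsum_Nil)
next
  case (Cons y l0)
  obtain h' x where y: "y = (h', x)" by force
  with Cons have x: "x \<in> HP" and vl: "bvalid sc D S l0" by auto
  obtain le0 where le0: "QW (tsc c (etn (bsum sc D S l0) m)) = QW (SL le0)" using Cons.IH[OF vl] by blast
  have A: "hom_act h' (phi sc D S x) \<in> HB" by (intro hom_act_in phi_in x)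
  have B: "bsum sc D S l0 \<in> HB" using vl by (auto simp: Hbar_iff)
  have "QW (tsc c (etn (hom_act h' (phi sc D S x)) m))
      = QW (tsc c (etn (hom_act h' phi1) (hpa x m)))"
    by (rule QW_cong_tsc) (simp add: hom_phi_ract[OF x] R5[OF hom_act_in[OF phi1_in] x])
  also have "\<dots> = QW (etn (hom_act h' phi1) (scM c (hpa x m)))"
    by (rule R4[OF hom_act_in[OF phi1_in], symmetric])
  finally have a: "QW (tsc c (etn (hom_act h' (phi sc D S x)) m)) = QW (etn (hom_act h' phi1) (scM c (hpa x m)))" .
  have "QW (tsc c (etn (bsum sc D S (y # l0)) m))
      = QW (tsc c (etn (hom_act h' (phi sc D S x)) m) + tsc c (etn (bsum sc D S l0) m))"
    unfolding y bsum_Cons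
    by (rule QW_cong_tsc[OF R1[OF A B], simplified tsm.scale_right_distrib])
  also have "\<dots> = QW (etn (hom_act h' phi1) (scM c (hpa x m)) + SL le0)"
    by (rule QW_cong_add[OF a le0])
  also have "\<dots> = QW (SL ((h', scM c (hpa x m)) # le0))" by simp
  finally show ?case by blast
qed

lemma PS_SL: "p \<in> PS \<Longrightarrow> \<exists>le. QW p = QW (SL le)"
proof -
  assume p: "p \<in> PS"
  have "finite K \<Longrightarrow> K \<subseteq> Poly_Mapping.keys p \<Longrightarrow>
     \<exists>le. QW (\<Sum>k\<in>K. tsc (Poly_Mapping.lookup p k) (etn (fst k) (snd k))) = QW (SL le)" for K
  proof (induction K rule: finite_induct)
    case empty then show ?case by (intro exI[of _ "[]"]) simp
  next
    case (insert k K)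
    then obtain le where le: "QW (\<Sum>k\<in>K. tsc (Poly_Mapping.lookup p k) (etn (fst k) (snd k))) = QW (SL le)" by auto
    have "fst k \<in> HB" using insert p by auto
    then obtain l0 where v: "bvalid sc D S l0" and f: "fst k = bsum sc D S l0" by (auto simp: Hbar_iff)
    obtain le1 where le1: "QW (tsc (Poly_Mapping.lookup p k) (etn (fst k) (snd k))) = QW (SL le1)"
      using single_case[OF v] f by metis
    have "QW (\<Sum>k\<in>insert k K. tsc (Poly_Mapping.lookup p k) (etn (fst k) (snd k)))
        = QW (tsc (Poly_Mapping.lookup p k) (etn (fst k) (snd k)) + (\<Sum>k\<in>K. tsc (Poly_Mapping.lookup p k) (etn (fst k) (snd k))))"
      using insert by simp
    also have "\<dots> = QW (SL le1 + SL le)" by (rule QW_cong_add[OF le1 le])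
    also have "\<dots> = QW (SL (le1 @ le))" by simp
    finally show ?case by blast
  qed
  from this[OF finite_keys subset_refl] obtain le
    where "QW (\<Sum>k\<in>Poly_Mapping.keys p. tsc (Poly_Mapping.lookup p k) (etn (fst k) (snd k))) = QW (SL le)" by blast
  moreover have "(\<Sum>k\<in>Poly_Mapping.keys p. tsc (Poly_Mapping.lookup p k) (etn (fst k) (snd k))) = p"
    by (subst (3) expand_single) (simp add: etn_def)
  ultimately show ?thesis by auto
qed

lemma csum_SL: "csum NADD NZ (map (\<lambda>(h, t). NACT h t) (map (\<lambda>(h, e). (h, TH e)) le)) = QW (SL le)"
proof (induction le)
  case Nil then show ?case by (simp add: csum_def QW_zero)
next
  case (Cons a le)
  obtain h e where a: "a = (h, e)" by force
  from Cons show ?case by (simp add: a csum_def nact_TH QW_add)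
qed

lemma proper_part: "x \<in> NN \<Longrightarrow> \<exists>l. set l \<subseteq> UNIV \<times> TT ` NN \<and> x = csum NADD NZ (map (\<lambda>(h, t). NACT h t) l)"
proof -
  assume "x \<in> NN"
  then obtain p where p: "p \<in> PS" and x: "x = QW p" by (auto simp: NN_iff)
  obtain le where le: "QW p = QW (SL le)" using PS_SL[OF p] by blast
  show ?thesis
  proof (intro exI conjI)
    show "set (map (\<lambda>(h, e). (h, TH e)) le) \<subseteq> UNIV \<times> TT ` NN"
      unfolding T_image by auto
    show "x = csum NADD NZ (map (\<lambda>(h, t). NACT h t) (map (\<lambda>(h, e). (h, TH e)) le))"
      by (simp only: csum_SL x le)
  qed
qed

lemma part3: "proper_dilation sc D S scM \<pi> NN NADD NZ NSC NACT TT TH"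
  unfolding proper_dilation_def dilation_def
  using hmod_NN T_clin T_idem c_condition pmod_TN bij_TH TH_add TH_sc TH_pi proper_part
  by blast

end

theorem mainTheorem13:
  fixes sc :: "'k::field \<Rightarrow> 'h::ring_1 \<Rightarrow> 'h"
    and D :: "'h \<Rightarrow> ('h \<times> 'h) list" and eps :: "'h \<Rightarrow> 'k" and S :: "'h \<Rightarrow> 'h"
    and scM :: "'k \<Rightarrow> 'm::ab_group_add \<Rightarrow> 'm" and \<pi> :: "'h \<Rightarrow> 'm \<Rightarrow> 'm"
  assumes "hopf_algebra sc D eps S"
    and "pmod sc D S UNIV (+) 0 scM \<pi>"
  shows "(\<forall>l l' y. bvalid sc D S l \<and> bvalid sc D S l' \<and> y \<in> hp_carrier sc D S \<and>
              bsum sc D S l = bsum sc D S l' \<longrightarrow>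
              bsum sc D S (rmul_list sc D S l y) = bsum sc D S (rmul_list sc D S l' y))
         \<and> bimodule sc (Hbar sc D S) (fadd sc D S) (fzero sc D S) (fsc sc D S) hom_act
              (hp_carrier sc D S) (hp_add sc D S) (hp_sc sc D S) (hp_mul sc D S) (hp_one sc D S)
              (ract sc D S)
         \<and> proper_dilation sc D S scM \<pi>
              (Nsec sc D S scM \<pi>) (nadd sc D S scM \<pi>) (nzero sc D S scM \<pi>) (nsc sc D S scM \<pi>)
              (nact sc D S scM \<pi>) (Tsec sc D S scM \<pi>) (phisec sc D S scM \<pi>)"
proof -
  have hh: "\<forall>c x y. sc c (x * y) = sc c x * y \<and> sc c (x * y) = x * sc c y"
    using assms(1) unfolding hopf_algebra_def by blast
  have h1: "\<And>c x y. sc c (x * y) = sc c x * y" and h2: "\<And>c x y. sc c (x * y) = x * sc c y"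
    using hh by blast+
  interpret setting sc D S scM \<pi>
    by (rule setting.intro[OF h1 h2 assms(2)])
  show ?thesis using part1 part2 part3 by blast
qed

end
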